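(* Let $3\le h\le n-1$ and let $G$ be a connected graph $D$-cospectral to $K^{h}_{n}$. Then $G$ contains no induced subgraph isomorphic to any of the graphs $C_4$, $C_5$, $H_1$, $H_4$, $H_9$, $H_{10}$, $H_{11}$, $H_{12}$, $H_{13}$, where: $H_1$ is the path $a\!-\!b\!-\!c\!-\!d$ together with a vertex $e$ adjacent to all of $a,b,c,d$; $H_4$ has vertices $a,b,c,d,e$ and edges $ab,bc,ad,bd,be,de$ (a $K_4$ minus an edge, with a pendant vertex $c$ attached to one of its two vertices of degree $3$); $H_9$ is $K_2\vee P_3$ (an edge whose two ends are both joined to every vertex of a path on $3$ vertices); $H_{10}$ is $K_2\vee \overline{K_3}$ (an edge whose two ends are both joined to each of $3$ pairwise non-adjacent vertices); $H_{11}$ is $K_5$ together with one extra vertex adjacent to exactly two vertices of the $K_5$; $H_{12}$ is $K_2\vee 2K_2$ (an edge whose two ends are both joined to every vertex of two disjoint edges); $H_{13}$ consists of two triangles sharing exactly one vertex $b$, together with a pendant vertex adjacent to $b$.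
   Context: For a connected graph $G$, the distance matrix $D(G)$ has as $(i,j)$-entry the distance between the $i$-th and $j$-th vertices; two graphs are $D$-cospectral if their distance matrices have the same spectrum. $K^{h}_{n}$ denotes the graph on $n$ vertices obtained from $K_h$ by attaching $n-h$ pendant edges to one vertex of $K_h$. $G_1\vee G_2$ denotes the join (complete product) of $G_1$ and $G_2$; $\overline{K_3}$ is the edgeless graph on $3$ vertices; $2K_2$ is two disjoint edges. *)

theory Defs
  imports Main "Jordan_Normal_Form.Char_Poly"
begin

definition simple_graph :: "nat \<Rightarrow> (nat \<Rightarrow> nat \<Rightarrow> bool) \<Rightarrow> bool" where
  "simple_graph n E \<longleftrightarrow> (\<forall>i j. E i j \<longrightarrow> i < n \<and> j < n) \<and>
     (\<forall>i j. E i j \<longrightarrow> E j i) \<and> (\<forall>i. \<not> E i i)"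

fun has_walk :: "(nat \<Rightarrow> nat \<Rightarrow> bool) \<Rightarrow> nat \<Rightarrow> nat \<Rightarrow> nat \<Rightarrow> bool" where
  "has_walk E 0 u v = (u = v)"
| "has_walk E (Suc k) u v = (\<exists>w. E u w \<and> has_walk E k w v)"

definition connected_graph :: "nat \<Rightarrow> (nat \<Rightarrow> nat \<Rightarrow> bool) \<Rightarrow> bool" where
  "connected_graph n E \<longleftrightarrow> (\<forall>u<n. \<forall>v<n. \<exists>k. has_walk E k u v)"

definition gdist :: "(nat \<Rightarrow> nat \<Rightarrow> bool) \<Rightarrow> nat \<Rightarrow> nat \<Rightarrow> nat" where
  "gdist E u v = (LEAST k. has_walk E k u v)"

definition dist_matrix :: "nat \<Rightarrow> (nat \<Rightarrow> nat \<Rightarrow> bool) \<Rightarrow> real mat" where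
  "dist_matrix n E = mat n n (\<lambda>(i, j). real (gdist E i j))"

text \<open>D-cospectral: the distance matrices have the same spectrum (with
  multiplicities), i.e. the same characteristic polynomial.\<close>
definition D_cospectral ::
  "nat \<Rightarrow> (nat \<Rightarrow> nat \<Rightarrow> bool) \<Rightarrow> nat \<Rightarrow> (nat \<Rightarrow> nat \<Rightarrow> bool) \<Rightarrow> bool" where
  "D_cospectral n E m F \<longleftrightarrow> char_poly (dist_matrix n E) = char_poly (dist_matrix m F)"

text \<open>K^h_n: clique on {0..<h}, vertices h..n-1 pendant at vertex 0.\<close>
definition Khn :: "nat \<Rightarrow> nat \<Rightarrow> nat \<Rightarrow> nat \<Rightarrow> bool" where
  "Khn h n i j \<longleftrightarrow> i \<noteq> j \<and> i < n \<and> j < n \<and>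
     ((i < h \<and> j < h) \<or> (i = 0 \<and> h \<le> j) \<or> (j = 0 \<and> h \<le> i))"

definition graph_of_edges :: "(nat \<times> nat) list \<Rightarrow> nat \<Rightarrow> nat \<Rightarrow> bool" where
  "graph_of_edges es i j \<longleftrightarrow> (i, j) \<in> set es \<or> (j, i) \<in> set es"

definition has_induced :: "nat \<Rightarrow> (nat \<Rightarrow> nat \<Rightarrow> bool) \<Rightarrow> nat \<Rightarrow> (nat \<Rightarrow> nat \<Rightarrow> bool) \<Rightarrow> bool" where
  "has_induced n E m H \<longleftrightarrow> (\<exists>f. inj_on f {..<m} \<and> f ` {..<m} \<subseteq> {..<n} \<and>
      (\<forall>i<m. \<forall>j<m. E (f i) (f j) \<longleftrightarrow> H i j))"

definition C4 where "C4 = graph_of_edges [(0,1),(1,2),(2,3),(3,0)]"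
definition C5 where "C5 = graph_of_edges [(0,1),(1,2),(2,3),(3,4),(4,0)]"
text \<open>H1: path a-b-c-d (0-1-2-3) plus e=4 adjacent to all.\<close>
definition H1 where "H1 = graph_of_edges [(0,1),(1,2),(2,3),(4,0),(4,1),(4,2),(4,3)]"
text \<open>H4: a=0,b=1,c=2,d=3,e=4; edges ab,bc,ad,bd,be,de.\<close>
definition H4 where "H4 = graph_of_edges [(0,1),(1,2),(0,3),(1,3),(1,4),(3,4)]"
text \<open>H9 = K2 join P3: K2 = {0,1}, P3 = 2-3-4.\<close>
definition H9 where "H9 = graph_of_edges
  [(0,1),(2,3),(3,4),(0,2),(0,3),(0,4),(1,2),(1,3),(1,4)]"
definition H10 where "H10 = graph_of_edges [(0,1),(0,2),(0,3),(0,4),(1,2),(1,3),(1,4)]"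
text \<open>H11 = K5 on {0..4} plus vertex 5 adjacent to 0 and 1.\<close>
definition H11 where "H11 = graph_of_edges
  [(0,1),(0,2),(0,3),(0,4),(1,2),(1,3),(1,4),(2,3),(2,4),(3,4),(5,0),(5,1)]"
text \<open>H12 = K2 join 2K2: K2 = {0,1}, 2K2 = {2,3},{4,5}.\<close>
definition H12 where "H12 = graph_of_edges
  [(0,1),(2,3),(4,5),(0,2),(0,3),(0,4),(0,5),(1,2),(1,3),(1,4),(1,5)]"
text \<open>H13: triangles 0-1-2 and 0-3-4 sharing b=0, pendant 5 at 0.\<close>
definition H13 where "H13 = graph_of_edges [(0,1),(1,2),(2,0),(0,3),(3,4),(4,0),(0,5)]"

end

theory Submission
  imports Defs "Jordan_Normal_Form.Schur_Decomposition"
begin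

definition diagm :: "real list \<Rightarrow> real mat" where
  "diagm es = mat (length es) (length es) (\<lambda>(i,j). if i = j then es ! i else 0)"

lemma conj_real_vec[simp]: "conjugate (v :: real vec) = v"
  by (intro eq_vecI) (auto simp: conjugate_real_def)

lemma char_poly_one_block: "char_poly (mat 1 1 (\<lambda>_. e)) = [:- (e::real), 1:]"
  by (simp add: char_poly_defs det_def sign_def)

lemma spectral_aux:
  fixes A :: "real mat"
  assumes A: "A \<in> carrier_mat n n" and sym: "A\<^sup>T = A"
    and cp: "char_poly A = (\<Prod>e\<leftarrow>es. [:- e, 1:])"
  shows "\<exists>Q \<in> carrier_mat n n. Q\<^sup>T * Q = 1\<^sub>m n \<and> Q\<^sup>T * A * Q = diagm es"
  using A sym cp
proof (induct es arbitrary: n A)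
  case Nil
  from degree_monic_char_poly[OF Nil(1)] Nil(3) have n: "n = 0" by simp
  show ?case
    by (rule bexI[of _ "1\<^sub>m n"], insert Nil(1) n, auto simp: diagm_def intro!: eq_matI)
next
  case (Cons e es n A)
  note A = Cons(2) and sym = Cons(3) and cp = Cons(4)
  have deg: "degree (char_poly A) = Suc (length es)" unfolding cp
    using degree_linear_factors[of uminus "e # es"] by simp
  with degree_monic_char_poly[OF A] have n0: "n \<noteq> 0" and lenes: "length es = n - 1" by auto
  have e: "eigenvalue A e" unfolding eigenvalue_root_char_poly[OF A] cp by simp
  define v where "v = find_eigenvector A e"
  from find_eigenvector[OF A e] have ev: "eigenvector A v e" unfolding v_def .
  hence v: "v \<in> carrier_vec n" and v0: "v \<noteq> 0\<^sub>v n" and Av: "A *\<^sub>v v = e \<cdot>\<^sub>v v"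
    using A unfolding eigenvector_def by auto
  interpret cof_vec_space n "TYPE(real)" .
  define b where "b = basis_completion v"
  from basis_completion[OF v v0, folded b_def]
  have span_b: "span (set b) = carrier_vec n" and dist_b: "distinct b"
    and indep: "\<not> lin_dep (set b)" and b: "set b \<subseteq> carrier_vec n" 
    and lenb: "length b = n"
    by auto
  have hdb: "hd b = v" unfolding b_def basis_completion_def Let_def by simp
  from lenb n0 obtain vs where bv: "b = v # vs" using hdb by (cases b, auto)
  define ws0 where "ws0 = gram_schmidt n b"
  from gram_schmidt_result[OF b dist_b indep ws0_def]
  have ws0: "set ws0 \<subseteq> carrier_vec n" "corthogonal ws0" "length ws0 = n" 
    by (auto simp: lenb)
  from gram_schmidt_hd[OF v, of vs, folded bv] have hdws0: "hd ws0 = v" unfolding ws0_def .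
  define nr where "nr = (\<lambda>w::real vec. 1 / sqrt (w \<bullet> w))"
  define ws where "ws = map (\<lambda>w. nr w \<cdot>\<^sub>v w) ws0"
  have lenws: "length ws = n" using ws0 unfolding ws_def by simp
  have wsc: "\<And>i. i < n \<Longrightarrow> ws ! i \<in> carrier_vec n" using ws0 unfolding ws_def by auto
  have pos: "\<And>i. i < n \<Longrightarrow> ws0 ! i \<bullet> ws0 ! i > 0"
  proof -
    fix i assume i: "i < n"
    have w: "ws0 ! i \<in> carrier_vec n" using ws0 i by auto
    have "ws0 ! i \<bullet> ws0 ! i \<noteq> 0" using corthogonalD[OF ws0(2), of i i] ws0(3) i by simp
    moreover have "ws0 ! i \<bullet> ws0 ! i \<ge> 0" unfolding scalar_prod_def
      by (intro sum_nonneg) auto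
    ultimately show "ws0 ! i \<bullet> ws0 ! i > 0" by linarith
  qed
  have orth: "\<And>i j. i < n \<Longrightarrow> j < n \<Longrightarrow> ws ! i \<bullet> ws ! j = (if i = j then 1 else 0)"
  proof -
    fix i j assume i: "i < n" and j: "j < n"
    have wi: "ws0 ! i \<in> carrier_vec n" and wj: "ws0 ! j \<in> carrier_vec n" using ws0 i j by auto
    have "ws ! i \<bullet> ws ! j = nr (ws0 ! i) * nr (ws0 ! j) * (ws0 ! i \<bullet> ws0 ! j)"
      unfolding ws_def using i j ws0(3) wi wj
      by (simp add: smult_scalar_prod_distrib scalar_prod_smult_distrib)
    also have "\<dots> = (if i = j then 1 else 0)"
    proof (cases "i = j")
      case True
      have p: "ws0 ! i \<bullet> ws0 ! i > 0" using pos i .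
      show ?thesis using True p unfolding nr_def
        by (simp add: field_simps)
    next
      case False
      have "ws0 ! i \<bullet> ws0 ! j = 0" using corthogonalD[OF ws0(2), of i j] ws0(3) i j False by simp
      thus ?thesis using False by simp
    qed
    finally show "ws ! i \<bullet> ws ! j = (if i = j then 1 else 0)" .
  qed
  define W where "W = mat_of_cols n ws"
  have W: "W \<in> carrier_mat n n" unfolding W_def using lenws by auto
  have WTW: "W\<^sup>T * W = 1\<^sub>m n"
    by (rule eq_matI, insert W lenws wsc orth, auto simp: W_def)
  have WWT: "W * W\<^sup>T = 1\<^sub>m n" using mat_mult_left_right_inverse[OF _ W WTW] W by auto
  define A' where "A' = W\<^sup>T * A * W"
  have A': "A' \<in> carrier_mat n n" unfolding A'_def using W A by auto
  have symA': "A'\<^sup>T = A'"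
  proof -
    have "A'\<^sup>T = W\<^sup>T * (W\<^sup>T * A)\<^sup>T" unfolding A'_def
      using transpose_mult[of "W\<^sup>T * A" n n W n] W A by simp
    also have "W\<^sup>T * (W\<^sup>T * A)\<^sup>T = W\<^sup>T * (A * W)" using transpose_mult[of "W\<^sup>T" n n A n] W A sym by simp
    also have "\<dots> = A'" unfolding A'_def using W A by (simp add: assoc_mult_mat[of _ n n _ n _ n])
    finally show ?thesis .
  qed
  have ws00: "ws ! 0 = nr v \<cdot>\<^sub>v v" unfolding ws_def using hdws0 ws0(3) n0
    by (cases ws0, auto)
  have Aw0: "A *\<^sub>v (ws ! 0) = e \<cdot>\<^sub>v (ws ! 0)" unfolding ws00 using A v Av
    by (simp add: mult_mat_vec smult_smult_assoc mult.commute)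
  have col0: "\<And>i. i < n \<Longrightarrow> A' $$ (i, 0) = (if i = 0 then e else 0)"
  proof -
    fix i assume i: "i < n"
    have "A' $$ (i, 0) = (W\<^sup>T * (A * W)) $$ (i, 0)" unfolding A'_def using W A
      by (simp add: assoc_mult_mat[of _ n n _ n _ n])
    also have "\<dots> = row (W\<^sup>T) i \<bullet> col (A * W) 0" using W A i n0 by simp
    also have "row (W\<^sup>T) i = ws ! i" using W i lenws wsc[OF i] unfolding W_def by simp
    also have "col (A * W) 0 = A *\<^sub>v col W 0" using n0 by (intro col_mult2[OF A W]) simp
    also have "col W 0 = ws ! 0" using n0 lenws wsc unfolding W_def by simp
    also have "ws ! i \<bullet> (A *\<^sub>v (ws ! 0)) = e * (ws ! i \<bullet> ws ! 0)"
      unfolding Aw0 using wsc[OF i] wsc[of 0] n0 by (simp add: scalar_prod_smult_distrib)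
    finally show "A' $$ (i, 0) = (if i = 0 then e else 0)" using orth[OF i, of 0] n0 by simp
  qed
  define m where "m = n - 1"
  have nm: "n = Suc m" using n0 unfolding m_def by simp
  define A3 where "A3 = mat m m (\<lambda>(i,j). A' $$ (Suc i, Suc j))"
  have A3: "A3 \<in> carrier_mat m m" unfolding A3_def by simp
  have symA3: "A3\<^sup>T = A3"
  proof (rule eq_matI)
    fix i j assume "i < dim_row A3" "j < dim_col A3"
    hence i: "i < m" "j < m" using A3 by auto
    have "A' $$ (Suc j, Suc i) = A'\<^sup>T $$ (Suc i, Suc j)" using A' i nm by simp
    thus "A3\<^sup>T $$ (i, j) = A3 $$ (i, j)" using i unfolding A3_def symA' by simp
  qed (insert A3, auto)
  define A1 where "A1 = mat 1 1 (\<lambda>_. e)"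
  have A'blk: "A' = four_block_mat A1 (0\<^sub>m 1 m) (0\<^sub>m m 1) A3"
  proof (rule eq_matI)
    fix i j assume ij: "i < dim_row (four_block_mat A1 (0\<^sub>m 1 m) (0\<^sub>m m 1) A3)"
       "j < dim_col (four_block_mat A1 (0\<^sub>m 1 m) (0\<^sub>m m 1) A3)"
    hence i: "i < n" "j < n" using nm A3 by (auto simp: A1_def)
    have row0: "\<And>j. j < n \<Longrightarrow> A' $$ (0, j) = (if j = 0 then e else 0)"
    proof -
      fix j assume j: "j < n"
      have "A' $$ (0, j) = A'\<^sup>T $$ (j, 0)" using A' j n0 by simp
      thus "A' $$ (0, j) = (if j = 0 then e else 0)" using col0[OF j] symA' by simp
    qed
    show "A' $$ (i, j) = four_block_mat A1 (0\<^sub>m 1 m) (0\<^sub>m m 1) A3 $$ (i, j)"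
      using i col0 row0 A3 nm
      by (cases i; cases j; auto simp: A1_def A3_def)
  qed (insert A' A3 nm, auto simp: A1_def)
  have simA: "similar_mat A' A"
    by (rule similar_matI[of A' A "W\<^sup>T" W n], insert A A' W WTW WWT, auto simp: A'_def)
  have "char_poly A' = char_poly A1 * char_poly A3"
    unfolding A'blk by (rule char_poly_four_block_zeros_col[OF _ _ A3], auto simp: A1_def)
  hence "char_poly A' = [:-e,1:] * char_poly A3" unfolding A1_def char_poly_one_block .
  hence "[:-e,1:] * char_poly A3 = [:-e,1:] * (\<Prod>e\<leftarrow>es. [:- e, 1:])"
    using char_poly_similar[OF simA] cp by simp
  hence cp3: "char_poly A3 = (\<Prod>e\<leftarrow>es. [:- e, 1:])"
    by (metis mult_cancel_left pCons_eq_0_iff zero_neq_one)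
  from Cons(1)[OF A3 symA3 cp3] obtain Q3 where Q3: "Q3 \<in> carrier_mat m m"
    and Q3o: "Q3\<^sup>T * Q3 = 1\<^sub>m m" and Q3d: "Q3\<^sup>T * A3 * Q3 = diagm es" by blast
  define P where "P = four_block_mat (1\<^sub>m 1) (0\<^sub>m 1 m) (0\<^sub>m m 1) Q3"
  have P: "P \<in> carrier_mat n n" unfolding P_def using Q3 nm by auto
  have PT: "P\<^sup>T = four_block_mat (1\<^sub>m 1) (0\<^sub>m 1 m) (0\<^sub>m m 1) Q3\<^sup>T"
    unfolding P_def using transpose_four_block_mat[of "1\<^sub>m 1" 1 1 "0\<^sub>m 1 m" m "0\<^sub>m m 1" m Q3] Q3 by simp
  have PTP: "P\<^sup>T * P = 1\<^sub>m n" unfolding PT unfolding P_def 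
    using mult_four_block_mat[of "1\<^sub>m 1" 1 1 "0\<^sub>m 1 m" m "0\<^sub>m m 1" m "Q3\<^sup>T" "1\<^sub>m 1" 1 "0\<^sub>m 1 m" m "0\<^sub>m m 1" Q3]
      Q3 Q3o nm four_block_one_mat[of 1 m] by simp
  have PAP: "P\<^sup>T * A' * P = diagm (e # es)"
  proof -
    have "P\<^sup>T * A' = four_block_mat A1 (0\<^sub>m 1 m) (0\<^sub>m m 1) (Q3\<^sup>T * A3)"
      unfolding PT A'blk
      using mult_four_block_mat[of "1\<^sub>m 1" 1 1 "0\<^sub>m 1 m" m "0\<^sub>m m 1" m "Q3\<^sup>T" A1 1 "0\<^sub>m 1 m" m "0\<^sub>m m 1" A3]
        Q3 A3 by (simp add: A1_def)
    also have "\<dots> * P = four_block_mat A1 (0\<^sub>m 1 m) (0\<^sub>m m 1) (Q3\<^sup>T * A3 * Q3)"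
      unfolding P_def
      using mult_four_block_mat[of A1 1 1 "0\<^sub>m 1 m" m "0\<^sub>m m 1" m "Q3\<^sup>T * A3" "1\<^sub>m 1" 1 "0\<^sub>m 1 m" m "0\<^sub>m m 1" Q3]
        Q3 A3 by (simp add: A1_def)
    also have "\<dots> = diagm (e # es)" unfolding Q3d
      by (rule eq_matI, insert lenes nm, auto simp: diagm_def A1_def nth_Cons')
    finally show ?thesis .
  qed
  define Q where "Q = W * P"
  have Q: "Q \<in> carrier_mat n n" unfolding Q_def using W P by auto
  have QT: "Q\<^sup>T = P\<^sup>T * W\<^sup>T" unfolding Q_def using W P by (simp add: transpose_mult)
  have "Q\<^sup>T * Q = (P\<^sup>T * W\<^sup>T) * (W * P)" unfolding QT by (simp add: Q_def)
  also have "\<dots> = P\<^sup>T * (W\<^sup>T * W) * P" using W P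
    by (simp add: assoc_mult_mat[of _ n n _ n _ n])
  also have "\<dots> = 1\<^sub>m n" unfolding WTW using P PTP by simp
  finally have QTQ: "Q\<^sup>T * Q = 1\<^sub>m n" .
  have "Q\<^sup>T * A * Q = (P\<^sup>T * W\<^sup>T) * A * (W * P)" unfolding QT by (simp add: Q_def)
  also have "\<dots> = P\<^sup>T * A' * P" unfolding A'_def using W P A
    by (simp add: assoc_mult_mat[of _ n n _ n _ n])
  finally have "Q\<^sup>T * A * Q = P\<^sup>T * A' * P" .
  with PAP have "Q\<^sup>T * A * Q = diagm (e # es)" by simp
  with Q QTQ show ?case by blast
qed

lemma real_eig_complex:
  fixes A :: "real mat" and a :: complex
  assumes A: "A \<in> carrier_mat n n" and sym: "A\<^sup>T = A"
    and root: "poly (char_poly (map_mat of_real A)) a = 0"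
  shows "a = of_real (Re a)"
proof -
  let ?C = "map_mat (of_real :: real \<Rightarrow> complex) A"
  have C: "?C \<in> carrier_mat n n" using A by simp
  have "eigenvalue ?C a" using eigenvalue_root_char_poly[OF C] root by simp
  from find_eigenvector[OF C this] obtain v where "eigenvector ?C v a" by blast
  hence v: "v \<in> carrier_vec n" and v0: "v \<noteq> 0\<^sub>v n" and Cv: "?C *\<^sub>v v = a \<cdot>\<^sub>v v"
    using C unfolding eigenvector_def by auto
  define s where "s = (\<Sum>i<n. \<Sum>j<n. cnj (v $ i) * of_real (A $$ (i,j)) * v $ j)"
  define N where "N = (\<Sum>i<n. cnj (v $ i) * v $ i)"
  have Cvi: "\<And>i. i < n \<Longrightarrow> (\<Sum>j<n. of_real (A $$ (i,j)) * v $ j) = a * v $ i"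
  proof -
    fix i assume i: "i < n"
    have "(?C *\<^sub>v v) $ i = a * v $ i" using Cv i v by simp
    moreover have "(?C *\<^sub>v v) $ i = (\<Sum>j<n. of_real (A $$ (i,j)) * v $ j)"
      using i A v by (simp add: scalar_prod_def lessThan_atLeast0)
    ultimately show "(\<Sum>j<n. of_real (A $$ (i,j)) * v $ j) = a * v $ i" by simp
  qed
  have "s = (\<Sum>i<n. cnj (v $ i) * (\<Sum>j<n. of_real (A $$ (i,j)) * v $ j))"
    unfolding s_def by (simp add: sum_distrib_left mult.assoc)
  also have "\<dots> = (\<Sum>i<n. cnj (v $ i) * (a * v $ i))" by (simp add: Cvi)
  also have "\<dots> = a * N" unfolding N_def sum_distrib_left by (simp add: ac_simps)
  finally have sN: "s = a * N" .
  have "cnj s = (\<Sum>i<n. \<Sum>j<n. v $ i * of_real (A $$ (i,j)) * cnj (v $ j))"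
    unfolding s_def by simp
  also have "\<dots> = (\<Sum>j<n. \<Sum>i<n. v $ i * of_real (A $$ (i,j)) * cnj (v $ j))"
    by (rule sum.swap)
  also have "\<dots> = s" unfolding s_def
  proof (intro sum.cong refl)
    fix j i assume "j \<in> {..<n}" "i \<in> {..<n}"
    hence "A $$ (i,j) = A $$ (j,i)" using sym A
      by (metis carrier_matD(1) carrier_matD(2) index_transpose_mat(1) lessThan_iff)
    thus "v $ i * of_real (A $$ (i,j)) * cnj (v $ j) = cnj (v $ j) * of_real (A $$ (j,i)) * v $ i"
      by simp
  qed
  finally have s_real: "cnj s = s" .
  have "\<And>i. cnj (v $ i) * v $ i = of_real ((cmod (v $ i))^2)"
    by (simp only: complex_norm_square mult.commute)
  hence N_real: "N = of_real (\<Sum>i<n. (cmod (v $ i))^2)" unfolding N_def of_real_sum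
    by simp
  have "\<exists>i<n. v $ i \<noteq> 0" using v v0 by (metis eq_vecI carrier_vecD index_zero_vec)
  then obtain i where i: "i < n" "v $ i \<noteq> 0" by blast
  have "(\<Sum>i<n. (cmod (v $ i))^2) > 0"
    by (rule sum_pos2[of _ i], insert i, auto)
  hence N0: "N \<noteq> 0" and cN: "cnj N = N" unfolding N_real
    by (metis of_real_eq_0_iff less_irrefl, simp)
  have "cnj a = a" using s_real sN N0 cN
    by (metis complex_cnj_mult mult_cancel_right)
  thus ?thesis by (metis Reals_cnj_iff complex_is_Real_iff of_real_Re)
qed

lemma real_sym_split:
  fixes A :: "real mat"
  assumes A: "A \<in> carrier_mat n n" and symA: "A\<^sup>T = A"
  shows "\<exists>es. char_poly A = (\<Prod>e\<leftarrow>es. [:- e, 1:])"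
proof -
  let ?C = "map_mat (of_real :: real \<Rightarrow> complex) A"
  have C: "?C \<in> carrier_mat n n" using A by simp
  from char_poly_factorized[OF C] obtain as where
    as: "char_poly ?C = (\<Prod>a\<leftarrow>as. [:- a, 1:])" by blast
  have ar: "\<And>a. a \<in> set as \<Longrightarrow> a = of_real (Re a)"
  proof -
    fix a assume "a \<in> set as"
    hence "poly (char_poly ?C) a = 0" unfolding as
      by (simp add: poly_prod_list prod_list_zero_iff)
    thus "a = of_real (Re a)" by (rule real_eig_complex[OF A symA])
  qed
  define es where "es = map Re as"
  have "map_poly of_real (char_poly A) = char_poly ?C"
    by (rule sym[OF of_real_hom.char_poly_hom[OF A]])
  also have "\<dots> = (\<Prod>a\<leftarrow>as. [:- of_real (Re a), 1:])" unfolding as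
    by (rule arg_cong[of _ _ prod_list], rule map_cong, auto dest: ar)
  also have "\<dots> = map_poly of_real (\<Prod>e\<leftarrow>es. [:- e, 1:])"
    unfolding es_def
  proof -
    interpret mh: map_poly_comm_ring_hom "of_real :: real \<Rightarrow> complex" ..
    show "(\<Prod>a\<leftarrow>as. [:- of_real (Re a), 1:]) = map_poly (of_real :: real \<Rightarrow> complex) (\<Prod>e\<leftarrow>map Re as. [:- e, 1:])"
    proof (induct as)
      case (Cons a as)
      have l: "map_poly (of_real :: real \<Rightarrow> complex) [:- Re a, 1:] = [:- of_real (Re a), 1:]" by simp
      show ?case using Cons by (simp only: list.map prod_list.Cons mh.hom_mult l)
    qed simp
  qed
  finally have eq: "map_poly (of_real :: real \<Rightarrow> complex) (char_poly A) = map_poly of_real (\<Prod>e\<leftarrow>es. [:- e, 1:])" .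
  interpret mi: map_poly_inj_comm_ring_hom "of_real :: real \<Rightarrow> complex"
    by (unfold_locales, auto)
  from eq have "char_poly A = (\<Prod>e\<leftarrow>es. [:- e, 1:])"
    using mi.eq_iff by blast
  thus ?thesis by blast
qed

definition qf :: "nat \<Rightarrow> real mat \<Rightarrow> (nat \<Rightarrow> real) \<Rightarrow> real" where
  "qf n M x = (\<Sum>i<n. \<Sum>j<n. M $$ (i,j) * x i * x j)"

definition sq :: "nat \<Rightarrow> (nat \<Rightarrow> real) \<Rightarrow> real" where
  "sq n x = (\<Sum>i<n. x i * x i)"

lemma qf_vec: assumes M: "M \<in> carrier_mat n n"
  shows "qf n M x = vec n x \<bullet> (M *\<^sub>v vec n x)"
  using M unfolding qf_def
  by (simp add: scalar_prod_def sum_distrib_left lessThan_atLeast0 ac_simps)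

lemma sq_vec: "sq n x = vec n x \<bullet> vec n x"
  unfolding sq_def scalar_prod_def by (simp add: lessThan_atLeast0)

lemma orth_sim:
  fixes A B :: "real mat"
  assumes A: "A \<in> carrier_mat n n" and B: "B \<in> carrier_mat n n"
    and sA: "A\<^sup>T = A" and sB: "B\<^sup>T = B" and cp: "char_poly A = char_poly B"
  shows "\<exists>R \<in> carrier_mat n n. \<forall>x. qf n A x = qf n B (\<lambda>i. (R *\<^sub>v vec n x) $ i)
     \<and> sq n x = sq n (\<lambda>i. (R *\<^sub>v vec n x) $ i)"
proof -
  from real_sym_split[OF A sA] obtain es where es: "char_poly A = (\<Prod>e\<leftarrow>es. [:- e, 1:])" by blast
  from spectral_aux[OF A sA es] obtain QA where QA: "QA \<in> carrier_mat n n"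
    and QAo: "QA\<^sup>T * QA = 1\<^sub>m n" and QAd: "QA\<^sup>T * A * QA = diagm es" by blast
  have esB: "char_poly B = (\<Prod>e\<leftarrow>es. [:- e, 1:])" using cp es by simp
  from spectral_aux[OF B sB esB] obtain QB where QB: "QB \<in> carrier_mat n n"
    and QBo: "QB\<^sup>T * QB = 1\<^sub>m n" and QBd: "QB\<^sup>T * B * QB = diagm es" by blast
  have QAo': "QA * QA\<^sup>T = 1\<^sub>m n" using mat_mult_left_right_inverse[OF _ QA QAo] QA by auto
  define R where "R = QB * QA\<^sup>T"
  have R: "R \<in> carrier_mat n n" unfolding R_def using QA QB by auto
  have RT: "R\<^sup>T = QA * QB\<^sup>T" unfolding R_def using QA QB by (simp add: transpose_mult)
  have RTR: "R\<^sup>T * R = 1\<^sub>m n"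
  proof -
    have "R\<^sup>T * R = (QA * QB\<^sup>T) * (QB * QA\<^sup>T)" unfolding RT by (simp add: R_def)
    also have "\<dots> = QA * (QB\<^sup>T * QB) * QA\<^sup>T" using QA QB
      by (simp add: assoc_mult_mat[of _ n n _ n _ n])
    also have "\<dots> = 1\<^sub>m n" unfolding QBo using QA QAo' by simp
    finally show ?thesis .
  qed
  have RBR: "R\<^sup>T * B * R = A"
  proof -
    have "R\<^sup>T * B * R = (QA * QB\<^sup>T) * B * (QB * QA\<^sup>T)" unfolding RT by (simp add: R_def)
    also have "\<dots> = QA * (QB\<^sup>T * B * QB) * QA\<^sup>T" using QA QB B
      by (simp add: assoc_mult_mat[of _ n n _ n _ n])
    also have "\<dots> = QA * (QA\<^sup>T * A * QA) * QA\<^sup>T" unfolding QBd QAd ..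
    also have "\<dots> = (QA * QA\<^sup>T) * A * (QA * QA\<^sup>T)" using QA A
      by (simp add: assoc_mult_mat[of _ n n _ n _ n])
    also have "\<dots> = A" unfolding QAo' using A by simp
    finally show ?thesis .
  qed
  show ?thesis
  proof (intro bexI[OF _ R] allI conjI)
    fix x :: "nat \<Rightarrow> real"
    define X where "X = vec n x"
    have X: "X \<in> carrier_vec n" unfolding X_def by simp
    have RX: "R *\<^sub>v X \<in> carrier_vec n" using R X by simp
    have vRX: "vec n (\<lambda>i. (R *\<^sub>v X) $ i) = R *\<^sub>v X" using RX R by (intro eq_vecI) auto
    have "qf n B (\<lambda>i. (R *\<^sub>v vec n x) $ i) = (R *\<^sub>v X) \<bullet> (B *\<^sub>v (R *\<^sub>v X))"
      unfolding qf_vec[OF B] X_def[symmetric] vRX ..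
    also have "\<dots> = (R\<^sup>T *\<^sub>v (B *\<^sub>v (R *\<^sub>v X))) \<bullet> X"
      using transpose_vec_mult_scalar[OF R X, of "B *\<^sub>v (R *\<^sub>v X)"] B RX
      by (simp add: comm_scalar_prod[of _ n])
    also have "R\<^sup>T *\<^sub>v (B *\<^sub>v (R *\<^sub>v X)) = (R\<^sup>T * B * R) *\<^sub>v X"
      using R B X by (simp add: assoc_mult_mat_vec[of _ n n _ n])
    also have "\<dots> = A *\<^sub>v X" unfolding RBR ..
    also have "(A *\<^sub>v X) \<bullet> X = qf n A x" unfolding qf_vec[OF A] X_def[symmetric]
      using A X by (simp add: comm_scalar_prod[of _ n])
    finally show "qf n A x = qf n B (\<lambda>i. (R *\<^sub>v vec n x) $ i)" ..
    have "sq n (\<lambda>i. (R *\<^sub>v vec n x) $ i) = (R *\<^sub>v X) \<bullet> (R *\<^sub>v X)"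
      unfolding sq_vec X_def[symmetric] vRX ..
    also have "\<dots> = (R\<^sup>T *\<^sub>v (R *\<^sub>v X)) \<bullet> X"
      using transpose_vec_mult_scalar[OF R X, of "R *\<^sub>v X"] RX
      by (simp add: comm_scalar_prod[of _ n])
    also have "R\<^sup>T *\<^sub>v (R *\<^sub>v X) = (R\<^sup>T * R) *\<^sub>v X"
      using R X by (simp add: assoc_mult_mat_vec[of _ n n _ n])
    also have "\<dots> = X" unfolding RTR using X by simp
    also have "X \<bullet> X = sq n x" unfolding sq_vec X_def ..
    finally show "sq n x = sq n (\<lambda>i. (R *\<^sub>v vec n x) $ i)" ..
  qed
qed

lemma lin_sol:
  fixes a :: "nat \<Rightarrow> nat \<Rightarrow> real"
  shows "m < k \<Longrightarrow> \<exists>c. (\<exists>j<k. c j \<noteq> 0) \<and> (\<forall>l<m. (\<Sum>j<k. a l j * c j) = 0)"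
proof (induct k arbitrary: m a)
  case 0 thus ?case by simp
next
  case (Suc k m a)
  show ?case
  proof (cases "m = 0")
    case True
    show ?thesis by (rule exI[of _ "\<lambda>j. if j = 0 then 1 else 0"], insert True, auto)
  next
    case m0: False
    show ?thesis
    proof (cases "\<forall>l<m. a l k = 0")
      case True
      show ?thesis
        by (rule exI[of _ "\<lambda>j. if j = k then 1 else 0"], insert True, auto simp: if_distrib cong: if_cong)
    next
      case False
      then obtain l0 where l0: "l0 < m" "a l0 k \<noteq> 0" by blast
      define r where "r = (\<lambda>l. if l < l0 then l else Suc l)"
      define b where "b = (\<lambda>l j. a (r l) j - a (r l) k / a l0 k * a l0 j)"
      have mk: "m - 1 < k" using Suc(2) m0 by simp
      from Suc(1)[OF mk, of b] obtain c' where
        c'1: "\<exists>j<k. c' j \<noteq> 0" and c'2: "\<forall>l<m-1. (\<Sum>j<k. b l j * c' j) = 0" by blast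
      define S0 where "S0 = (\<Sum>j<k. a l0 j * c' j)"
      define c where "c = (\<lambda>j. if j < k then c' j else - S0 / a l0 k)"
      have split: "\<And>l. (\<Sum>j<Suc k. a l j * c j) = (\<Sum>j<k. a l j * c' j) + a l k * (- S0 / a l0 k)"
        unfolding c_def by (simp add: lessThan_Suc)
      show ?thesis
      proof (rule exI[of _ c], intro conjI allI impI)
        show "\<exists>j<Suc k. c j \<noteq> 0" using c'1 unfolding c_def by auto
        fix l assume l: "l < m"
        show "(\<Sum>j<Suc k. a l j * c j) = 0"
        proof (cases "l = l0")
          case True thus ?thesis unfolding split S0_def using l0 by simp
        next
          case False
          define l' where "l' = (if l < l0 then l else l - 1)"
          have rl: "r l' = l" unfolding r_def l'_def using False by auto
          have l': "l' < m - 1" unfolding l'_def using l l0 False by auto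
          have "(\<Sum>j<k. b l' j * c' j) = 0" using c'2 l' by auto
          hence "(\<Sum>j<k. a l j * c' j) - a l k / a l0 k * S0 = 0"
            unfolding b_def rl S0_def by (simp add: algebra_simps sum_subtractf sum_distrib_left)
          thus ?thesis unfolding split by (simp add: field_simps)
        qed
      qed
    qed
  qed
qed

lemma main_ineq:
  fixes A B :: "real mat" and k :: nat and u w :: "nat \<Rightarrow> nat \<Rightarrow> real" and s t :: real
  assumes A: "A \<in> carrier_mat n n" and B: "B \<in> carrier_mat n n"
    and sA: "A\<^sup>T = A" and sB: "B\<^sup>T = B" and cp: "char_poly A = char_poly B"
    and k: "0 < k"
    and pos: "\<And>c. (\<exists>j<k. c j \<noteq> 0) \<Longrightarrow>
       s * (qf n A (\<lambda>i. \<Sum>j<k. c j * u j i) - t * sq n (\<lambda>i. \<Sum>j<k. c j * u j i)) > 0"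
    and neg: "\<And>x. (\<forall>l<k-1. (\<Sum>i<n. w l i * x i) = 0) \<Longrightarrow> s * (qf n B x - t * sq n x) \<le> 0"
  shows False
proof -
  from orth_sim[OF A B sA sB cp] obtain R where R: "R \<in> carrier_mat n n"
    and Rq: "\<And>x. qf n A x = qf n B (\<lambda>i. (R *\<^sub>v vec n x) $ i) \<and> sq n x = sq n (\<lambda>i. (R *\<^sub>v vec n x) $ i)"
    by blast
  have phi: "\<And>x i. i < n \<Longrightarrow> (R *\<^sub>v vec n x) $ i = (\<Sum>j<n. R $$ (i,j) * x j)"
    using R by (simp add: scalar_prod_def lessThan_atLeast0)
  define v where "v = (\<lambda>j i. \<Sum>j'<n. R $$ (i,j') * u j j')"
  define a where "a = (\<lambda>l j. \<Sum>i<n. w l i * v j i)"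
  from lin_sol[of "k - 1" k a] k obtain c where c1: "\<exists>j<k. c j \<noteq> 0"
    and c2: "\<forall>l<k-1. (\<Sum>j<k. a l j * c j) = 0" by auto
  define x where "x = (\<lambda>i. \<Sum>j<k. c j * u j i)"
  define y where "y = (\<lambda>i. (R *\<^sub>v vec n x) $ i)"
  have y: "\<And>i. i < n \<Longrightarrow> y i = (\<Sum>j<k. c j * v j i)"
    unfolding y_def phi x_def v_def
    by (simp add: sum_distrib_left sum_distrib_right ac_simps, rule sum.swap)
  have "\<forall>l<k-1. (\<Sum>i<n. w l i * y i) = 0"
  proof (intro allI impI)
    fix l assume l: "l < k - 1"
    have "(\<Sum>i<n. w l i * y i) = (\<Sum>i<n. w l i * (\<Sum>j<k. c j * v j i))"
      by (rule sum.cong, auto simp: y)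
    also have "\<dots> = (\<Sum>j<k. a l j * c j)" unfolding a_def
      by (simp add: sum_distrib_left sum_distrib_right ac_simps, rule sum.swap)
    also have "\<dots> = 0" using c2 l by auto
    finally show "(\<Sum>i<n. w l i * y i) = 0" .
  qed
  from neg[OF this] have "s * (qf n B y - t * sq n y) \<le> 0" .
  moreover have "s * (qf n A x - t * sq n x) > 0" using pos[OF c1] unfolding x_def .
  ultimately show False using Rq[of x] unfolding y_def by simp
qed

lemma has_walk_snoc: "has_walk E (Suc k) u v \<longleftrightarrow> (\<exists>w. has_walk E k u w \<and> E w v)"
  by (induct k arbitrary: u) auto

lemma has_walk_sym: assumes s: "\<And>a b. E a b \<Longrightarrow> E b a"
  shows "has_walk E k u v \<Longrightarrow> has_walk E k v u"
proof (induct k arbitrary: u v)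
  case 0 thus ?case by simp
next
  case (Suc k u v)
  from Suc(2) obtain w where w1: "E u w" and w2: "has_walk E k w v" by auto
  have a: "has_walk E k v w" by (rule Suc(1)[OF w2])
  have b: "E w u" by (rule s[OF w1])
  show ?case unfolding has_walk_snoc using a b by blast
qed

lemma gdist_sym: assumes s: "\<And>a b. E a b \<Longrightarrow> E b a"
  shows "gdist E u v = gdist E v u"
proof -
  have "\<And>k. has_walk E k u v = has_walk E k v u"
    using has_walk_sym[OF s, where u=u and v=v] has_walk_sym[OF s, where u=v and v=u] by (intro iffI) auto
  thus ?thesis unfolding gdist_def by simp
qed

lemma gdist_0: "gdist E u u = 0"
  unfolding gdist_def by (rule Least_equality) auto

lemma gdist_1: assumes "u \<noteq> v" "E u v" shows "gdist E u v = 1"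
  unfolding gdist_def
proof (rule Least_equality)
  show "has_walk E 1 u v" using assms by simp
  fix k assume "has_walk E k u v" thus "1 \<le> k" using assms by (cases k) auto
qed

lemma gdist_2: assumes "u \<noteq> v" "\<not> E u v" "E u w" "E w v" shows "gdist E u v = 2"
  unfolding gdist_def
proof (rule Least_equality)
  show "has_walk E 2 u v" using assms by (auto simp: numeral_2_eq_2)
  fix k assume "has_walk E k u v" thus "2 \<le> k" using assms
    by (cases k; cases "k - 1") (auto simp: numeral_2_eq_2)
qed

lemma dist_matrix_carrier: "dist_matrix n E \<in> carrier_mat n n"
  unfolding dist_matrix_def by simp

lemma dist_matrix_idx: "i < n \<Longrightarrow> j < n \<Longrightarrow> dist_matrix n E $$ (i,j) = real (gdist E i j)"
  unfolding dist_matrix_def by simp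

lemma dist_matrix_sym: assumes s: "\<And>a b. E a b \<Longrightarrow> E b a"
  shows "(dist_matrix n E)\<^sup>T = dist_matrix n E"
  by (rule eq_matI, auto simp: dist_matrix_def gdist_sym[OF s])

lemma simple_sym: "simple_graph n E \<Longrightarrow> E a b \<Longrightarrow> E b a"
  unfolding simple_graph_def by blast

lemma Khn_sym: "Khn h n a b \<Longrightarrow> Khn h n b a"
  unfolding Khn_def by auto

lemma Khn_dist: assumes h: "0 < h" and i: "i < n" and j: "j < n"
  shows "dist_matrix n (Khn h n) $$ (i,j) =
    (if i = j then 0 else if (i < h \<and> j < h) \<or> i = 0 \<or> j = 0 then 1 else 2)"
proof -
  have n: "0 < n" using i by simp
  show ?thesis
  proof (cases "i = j")
    case True thus ?thesis using i j by (simp add: dist_matrix_idx gdist_0)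
  next
    case ne: False
    show ?thesis
    proof (cases "(i < h \<and> j < h) \<or> i = 0 \<or> j = 0")
      case True
      hence "Khn h n i j" using ne i j h unfolding Khn_def by auto
      thus ?thesis using True ne i j by (simp add: dist_matrix_idx gdist_1)
    next
      case False
      hence "\<not> Khn h n i j" "Khn h n i 0" "Khn h n 0 j" using ne i j h n unfolding Khn_def by auto
      thus ?thesis using False ne i j by (simp add: dist_matrix_idx gdist_2)
    qed
  qed
qed

definition chi :: "nat \<Rightarrow> nat \<Rightarrow> real" where "chi h i = (if i < h then 1 else 0)"

lemma Khn_qf: fixes x :: "nat \<Rightarrow> real"
  assumes h: "0 < h" and hn: "h \<le> n"
  shows "qf n (dist_matrix n (Khn h n)) x = 2 * (\<Sum>i<n. x i) * (\<Sum>i<n. x i) - 2 * (\<Sum>i<n. x i * x i)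
     - ((\<Sum>i<n. chi h i * x i) * (\<Sum>i<n. chi h i * x i) - (\<Sum>i<n. chi h i * (x i * x i)))
     - 2 * x 0 * (\<Sum>i<n. (1 - chi h i) * x i)"
proof -
  define S where "S = (\<Sum>i<n. x i)"
  define T where "T = (\<Sum>i<n. x i * x i)"
  define SK where "SK = (\<Sum>i<n. chi h i * x i)"
  define SZ where "SZ = (\<Sum>i<n. (1 - chi h i) * x i)"
  define TK where "TK = (\<Sum>i<n. chi h i * (x i * x i))"
  have n: "0 < n" using h hn by simp
  have B: "\<And>i j. i < n \<Longrightarrow> j < n \<Longrightarrow> dist_matrix n (Khn h n) $$ (i,j) =
     2 - 2 * (if i = j then 1 else 0) - chi h i * chi h j + (if i = j then chi h i else 0)
       - (if i = 0 then 1 - chi h j else 0) - (if j = 0 then 1 - chi h i else 0)"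
    using h by (auto simp: Khn_dist chi_def)
  have d1: "\<And>i. i < n \<Longrightarrow> (\<Sum>j<n. (if i = j then 1 else 0) * x j) = x i"
    by (simp add: if_distrib[of "\<lambda>c. c * _"] cong: if_cong)
  have d2: "\<And>i. i < n \<Longrightarrow> (\<Sum>j<n. (if i = j then chi h i else 0) * x j) = chi h i * x i"
    by (simp add: if_distrib[of "\<lambda>c. c * _"] cong: if_cong)
  have d3: "\<And>i. (\<Sum>j<n. (if i = 0 then 1 - chi h j else 0) * x j) = (if i = 0 then SZ else 0)"
    unfolding SZ_def by (simp add: if_distrib[of "\<lambda>c. c * _"] cong: if_cong)
  have d4: "\<And>i. (\<Sum>j<n. (if j = 0 then 1 - chi h i else 0) * x j) = (1 - chi h i) * x 0"
    using n by (simp add: if_distrib[of "\<lambda>c. c * _"] cong: if_cong)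
  have inner: "\<And>i. i < n \<Longrightarrow> (\<Sum>j<n. dist_matrix n (Khn h n) $$ (i,j) * x j) =
      2 * S - 2 * x i - chi h i * SK + chi h i * x i - (if i = 0 then SZ else 0) - (1 - chi h i) * x 0"
  proof -
    fix i assume i: "i < n"
    have "(\<Sum>j<n. dist_matrix n (Khn h n) $$ (i,j) * x j) = (\<Sum>j<n. 
      2 * x j - 2 * ((if i = j then 1 else 0) * x j) - chi h i * (chi h j * x j) + (if i = j then chi h i else 0) * x j
       - (if i = 0 then 1 - chi h j else 0) * x j - (if j = 0 then 1 - chi h i else 0) * x j)"
      by (intro sum.cong refl, simp add: B i algebra_simps)
    also have "\<dots> = 2 * (\<Sum>j<n. x j) - 2 * (\<Sum>j<n. (if i = j then 1 else 0) * x j)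
      - chi h i * (\<Sum>j<n. chi h j * x j) + (\<Sum>j<n. (if i = j then chi h i else 0) * x j)
      - (\<Sum>j<n. (if i = 0 then 1 - chi h j else 0) * x j) - (\<Sum>j<n. (if j = 0 then 1 - chi h i else 0) * x j)"
      by (simp only: sum.distrib sum_subtractf sum_distrib_left)
    also have "\<dots> = 2 * S - 2 * x i - chi h i * SK + chi h i * x i - (if i = 0 then SZ else 0) - (1 - chi h i) * x 0"
      unfolding d1[OF i] d2[OF i] d3 d4 S_def SK_def by simp
    finally show "?thesis i" .
  qed
  have "qf n (dist_matrix n (Khn h n)) x = (\<Sum>i<n. x i * (\<Sum>j<n. dist_matrix n (Khn h n) $$ (i,j) * x j))"
    unfolding qf_def by (simp add: sum_distrib_left ac_simps)
  also have "\<dots> = (\<Sum>i<n. x i * (2 * S - 2 * x i - chi h i * SK + chi h i * x i - (if i = 0 then SZ else 0) - (1 - chi h i) * x 0))"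
    by (intro sum.cong refl, simp add: inner)
  also have "\<dots> = 2 * S * (\<Sum>i<n. x i) - 2 * (\<Sum>i<n. x i * x i) - SK * (\<Sum>i<n. chi h i * x i)
      + (\<Sum>i<n. chi h i * (x i * x i)) - (\<Sum>i<n. x i * (if i = 0 then SZ else 0)) - x 0 * (\<Sum>i<n. (1 - chi h i) * x i)"
  proof -
    have "(\<Sum>i<n. x i * (2 * S - 2 * x i - chi h i * SK + chi h i * x i - (if i = 0 then SZ else 0) - (1 - chi h i) * x 0))
      = (\<Sum>i<n. 2 * S * x i - 2 * (x i * x i) - SK * (chi h i * x i) + chi h i * (x i * x i)
          - x i * (if i = 0 then SZ else 0) - x 0 * ((1 - chi h i) * x i))"
      by (rule sum.cong, simp, simp only: algebra_simps)
    also have "\<dots> = 2 * S * (\<Sum>i<n. x i) - 2 * (\<Sum>i<n. x i * x i) - SK * (\<Sum>i<n. chi h i * x i)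
      + (\<Sum>i<n. chi h i * (x i * x i)) - (\<Sum>i<n. x i * (if i = 0 then SZ else 0)) - x 0 * (\<Sum>i<n. (1 - chi h i) * x i)"
      by (simp only: sum.distrib sum_subtractf sum_distrib_left)
    finally show ?thesis .
  qed
  finally have X: "qf n (dist_matrix n (Khn h n)) x = 2 * S * S - 2 * T - SK * SK
      + TK - (\<Sum>i<n. x i * (if i = 0 then SZ else 0)) - x 0 * SZ"
    unfolding S_def T_def SK_def TK_def SZ_def .
  have Y: "(\<Sum>i<n. x i * (if i = 0 then SZ else 0)) = (\<Sum>i<n. if i = 0 then x 0 * SZ else 0)"
    by (rule sum.cong) auto
  have Z: "(\<Sum>i<n. if i = 0 then x 0 * SZ else 0) = x 0 * SZ" using n by simp
  show ?thesis unfolding X Y Z unfolding S_def T_def SK_def TK_def SZ_def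
    by (simp add: algebra_simps)
qed

definition dH :: "(nat \<Rightarrow> nat \<Rightarrow> bool) \<Rightarrow> nat \<Rightarrow> nat \<Rightarrow> real" where
  "dH H p q = (if p = q then 0 else if H p q then 1 else 2)"

lemma embed_sum:
  fixes z g :: "nat \<Rightarrow> real"
  assumes inj: "inj_on f {..<m}" and img: "f ` {..<m} \<subseteq> {..<n}"
  shows "(\<Sum>j<n. g j * (\<Sum>p<m. if f p = j then z p else 0)) = (\<Sum>q<m. g (f q) * z q)"
proof -
  let ?x = "\<lambda>j. \<Sum>p<m. if f p = j then z p else 0"
  have xf: "\<And>q. q < m \<Longrightarrow> ?x (f q) = z q"
  proof -
    fix q assume q: "q < m"
    have "?x (f q) = (\<Sum>p<m. if p = q then z p else 0)"
      by (rule sum.cong[OF refl]) (insert q inj, auto simp: inj_on_def)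
    thus "?x (f q) = z q" using q by simp
  qed
  have x0: "\<And>j. j \<notin> f ` {..<m} \<Longrightarrow> ?x j = 0" by (rule sum.neutral) auto
  have "(\<Sum>j<n. g j * ?x j) = (\<Sum>j\<in>f ` {..<m}. g j * ?x j)"
    by (rule sum.mono_neutral_right) (insert img x0, auto)
  also have "\<dots> = (\<Sum>q<m. g (f q) * ?x (f q))" by (rule sum.reindex_cong[OF inj refl refl])
  also have "\<dots> = (\<Sum>q<m. g (f q) * z q)" by (rule sum.cong, auto simp: xf)
  finally show ?thesis .
qed

lemma embed_qf0:
  fixes z x :: "nat \<Rightarrow> real"
  assumes inj: "inj_on f {..<m}" and img: "f ` {..<m} \<subseteq> {..<n}"
    and x: "x = (\<lambda>j. \<Sum>p<m. if f p = j then z p else 0)"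
  shows "qf n M x = (\<Sum>p<m. \<Sum>q<m. M $$ (f p, f q) * z p * z q)"
    and "sq n x = (\<Sum>p<m. z p * z p)"
proof -
  have es: "\<And>g. (\<Sum>j<n. g j * x j) = (\<Sum>q<m. g (f q) * z q)"
    unfolding x by (rule embed_sum[OF inj img])
  have xf: "\<And>q. q < m \<Longrightarrow> x (f q) = z q"
  proof -
    fix q assume q: "q < m"
    have "x (f q) = (\<Sum>p<m. if p = q then z p else 0)" unfolding x
      by (rule sum.cong[OF refl]) (insert q inj, auto simp: inj_on_def)
    thus "x (f q) = z q" using q by simp
  qed
  have "qf n M x = (\<Sum>i<n. (\<Sum>j<n. M $$ (i,j) * x j) * x i)"
    unfolding qf_def by (intro sum.cong refl, simp only: sum_distrib_right, intro sum.cong refl, simp only: ac_simps)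
  also have "\<dots> = (\<Sum>p<m. (\<Sum>j<n. M $$ (f p,j) * x j) * z p)"
    by (rule es)
  also have "\<dots> = (\<Sum>p<m. (\<Sum>q<m. M $$ (f p,f q) * z q) * z p)"
    by (simp only: es)
  also have "\<dots> = (\<Sum>p<m. \<Sum>q<m. M $$ (f p, f q) * z p * z q)"
    by (intro sum.cong refl, simp only: sum_distrib_right, intro sum.cong refl, simp only: ac_simps)
  finally show "qf n M x = (\<Sum>p<m. \<Sum>q<m. M $$ (f p, f q) * z p * z q)" .
  have "sq n x = (\<Sum>i<n. x i * x i)" unfolding sq_def ..
  also have "\<dots> = (\<Sum>p<m. x (f p) * z p)" by (rule es)
  also have "\<dots> = (\<Sum>p<m. z p * z p)" by (rule sum.cong, auto simp: xf)
  finally show "sq n x = (\<Sum>p<m. z p * z p)" .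
qed

lemmas embed_qf = embed_qf0[OF _ _ refl]

lemma no_induced:
  fixes E H :: "nat \<Rightarrow> nat \<Rightarrow> bool" and U w :: "nat \<Rightarrow> nat \<Rightarrow> real" and s t :: real
    and k m :: nat
  assumes simple: "simple_graph n E"
    and cosp: "D_cospectral n E n (Khn h n)"
    and k: "0 < k"
    and ind: "has_induced n E m H"
    and diam: "\<forall>p<m. \<forall>q<m. p \<noteq> q \<longrightarrow> \<not> H p q \<longrightarrow> (\<exists>r<m. H p r \<and> H r q)"
    and pos: "\<forall>c. (\<exists>j<k. c j \<noteq> 0) \<longrightarrow> s * ((\<Sum>p<m. \<Sum>q<m. dH H p q * (\<Sum>j<k. c j * U j p) * (\<Sum>j<k. c j * U j q))
         - t * (\<Sum>p<m. (\<Sum>j<k. c j * U j p) * (\<Sum>j<k. c j * U j p))) > 0"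
    and neg: "\<forall>x. (\<forall>l<k-1. (\<Sum>i<n. w l i * x i) = 0) \<longrightarrow> s * (qf n (dist_matrix n (Khn h n)) x - t * sq n x) \<le> 0"
  shows False
proof -
  from ind obtain f where inj: "inj_on f {..<m}" and img: "f ` {..<m} \<subseteq> {..<n}"
    and iso: "\<forall>i<m. \<forall>j<m. E (f i) (f j) \<longleftrightarrow> H i j" unfolding has_induced_def by blast
  let ?A = "dist_matrix n E"
  let ?B = "dist_matrix n (Khn h n)"
  have dist: "\<And>p q. p < m \<Longrightarrow> q < m \<Longrightarrow> ?A $$ (f p, f q) = dH H p q"
  proof -
    fix p q assume p: "p < m" and q: "q < m"
    have fp: "f p < n" and fq: "f q < n" using img p q by auto
    show "?A $$ (f p, f q) = dH H p q"
    proof (cases "p = q")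
      case True thus ?thesis using fp by (simp add: dist_matrix_idx gdist_0 dH_def)
    next
      case False
      hence ne: "f p \<noteq> f q" using inj p q by (auto simp: inj_on_def)
      show ?thesis
      proof (cases "H p q")
        case True
        hence "E (f p) (f q)" using iso p q by auto
        thus ?thesis using True False ne fp fq by (simp add: dist_matrix_idx gdist_1 dH_def)
      next
        case nH: False
        from diam p q False nH obtain r where r: "r < m" "H p r" "H r q" by blast
        have "E (f p) (f r)" "E (f r) (f q)" "\<not> E (f p) (f q)" using iso p q r nH by auto
        thus ?thesis using nH False ne fp fq by (simp add: dist_matrix_idx gdist_2 dH_def)
      qed
    qed
  qed
  define u where "u = (\<lambda>j i. \<Sum>p<m. if f p = i then U j p else 0)"
  have symE: "\<And>a b. E a b \<Longrightarrow> E b a" using simple_sym[OF simple] .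
  show False
  proof (rule main_ineq[of ?A n ?B k s u t w])
    show "?A \<in> carrier_mat n n" "?B \<in> carrier_mat n n" by (rule dist_matrix_carrier)+
    show "?A\<^sup>T = ?A" by (rule dist_matrix_sym[OF symE])
    show "?B\<^sup>T = ?B" by (rule dist_matrix_sym[OF Khn_sym])
    show "char_poly ?A = char_poly ?B" using cosp unfolding D_cospectral_def .
    show "0 < k" by fact
    show "\<And>x. \<forall>l<k - 1. (\<Sum>i<n. w l i * x i) = 0 \<Longrightarrow> s * (qf n ?B x - t * sq n x) \<le> 0"
      using neg by blast
    fix c :: "nat \<Rightarrow> real" assume c: "\<exists>j<k. c j \<noteq> 0"
    define z where "z = (\<lambda>p. \<Sum>j<k. c j * U j p)"
    have xe: "(\<lambda>i. \<Sum>j<k. c j * u j i) = (\<lambda>i. \<Sum>p<m. if f p = i then z p else 0)"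
      unfolding u_def z_def
    proof (rule ext)
      fix i
      have "(\<Sum>j<k. c j * (\<Sum>p<m. if f p = i then U j p else 0)) = (\<Sum>j<k. \<Sum>p<m. if f p = i then c j * U j p else 0)"
        by (intro sum.cong refl) (auto simp: sum_distrib_left intro!: sum.cong)
      also have "\<dots> = (\<Sum>p<m. \<Sum>j<k. if f p = i then c j * U j p else 0)" by (rule sum.swap)
      also have "\<dots> = (\<Sum>p<m. if f p = i then (\<Sum>j<k. c j * U j p) else 0)"
        by (intro sum.cong refl) auto
      finally show "(\<Sum>j<k. c j * (\<Sum>p<m. if f p = i then U j p else 0)) = (\<Sum>p<m. if f p = i then (\<Sum>j<k. c j * U j p) else 0)" .
    qed
    have "qf n ?A (\<lambda>i. \<Sum>j<k. c j * u j i) = (\<Sum>p<m. \<Sum>q<m. dH H p q * z p * z q)"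
      unfolding xe embed_qf(1)[OF inj img] by (intro sum.cong refl, simp add: dist)
    moreover have "sq n (\<lambda>i. \<Sum>j<k. c j * u j i) = (\<Sum>p<m. z p * z p)"
      unfolding xe embed_qf(2)[OF inj img] ..
    ultimately show "s * (qf n ?A (\<lambda>i. \<Sum>j<k. c j * u j i) - t * sq n (\<lambda>i. \<Sum>j<k. c j * u j i)) > 0"
      using pos c unfolding z_def by simp
  qed
qed

lemma Khn_facts:
  fixes x :: "nat \<Rightarrow> real"
  assumes h: "0 < h" and hn: "h \<le> n"
  shows "(\<Sum>i<n. x i) = (\<Sum>i<n. chi h i * x i) + (\<Sum>i<n. (1 - chi h i) * x i)"
    and "sq n x = (\<Sum>i<n. chi h i * (x i * x i)) + (\<Sum>i<n. (1 - chi h i) * (x i * x i))"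
    and "(\<Sum>i<n. (1 - chi h i) * (x i * x i)) \<ge> 0"
    and "(\<Sum>i<n. chi h i * (x i * x i)) \<ge> x 0 * x 0"
proof -
  show "(\<Sum>i<n. x i) = (\<Sum>i<n. chi h i * x i) + (\<Sum>i<n. (1 - chi h i) * x i)"
    by (simp add: sum.distrib[symmetric] algebra_simps)
  show "sq n x = (\<Sum>i<n. chi h i * (x i * x i)) + (\<Sum>i<n. (1 - chi h i) * (x i * x i))"
    unfolding sq_def by (simp add: sum.distrib[symmetric] algebra_simps)
  show "(\<Sum>i<n. (1 - chi h i) * (x i * x i)) \<ge> 0"
    by (intro sum_nonneg) (auto simp: chi_def)
  have "chi h 0 * (x 0 * x 0) \<le> (\<Sum>i<n. chi h i * (x i * x i))"
    by (rule member_le_sum) (insert h hn, auto simp: chi_def)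
  thus "(\<Sum>i<n. chi h i * (x i * x i)) \<ge> x 0 * x 0" using h by (simp add: chi_def)
qed

lemma Kneg1:
  assumes h: "0 < h" and hn: "h \<le> n"
  shows "\<forall>x. (\<forall>l::nat<2-1. (\<Sum>i<n. (\<lambda>l i. if i = 0 then 1 else 2) l i * x i) = 0) \<longrightarrow>
     1 * (qf n (dist_matrix n (Khn h n)) x - (- 1 / 2) * sq n x) \<le> (0::real)"
proof (intro allI impI)
  fix x :: "nat \<Rightarrow> real"
  assume "\<forall>l::nat<2-1. (\<Sum>i<n. (\<lambda>l i. if i = 0 then 1 else 2) l i * x i) = (0::real)"
  hence c: "(\<Sum>i<n. (if i = 0 then 1 else 2) * x i) = 0" by simp
  have n: "0 < n" using h hn by simp
  have "(\<Sum>i<n. (if i = 0 then 1 else 2) * x i) = (\<Sum>i<n. 2 * x i - (if i = 0 then x i else 0))"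
    by (rule sum.cong) auto
  also have "\<dots> = 2 * (\<Sum>i<n. x i) - x 0" using n by (simp add: sum_subtractf sum_distrib_left)
  finally have c2: "x 0 = 2 * (\<Sum>i<n. x i)" using c by simp
  note F = Khn_facts[OF h hn, of x]
  define a where "a = (\<Sum>i<n. chi h i * x i)"
  define b where "b = (\<Sum>i<n. (1 - chi h i) * x i)"
  define TK where "TK = (\<Sum>i<n. chi h i * (x i * x i))"
  define TZ where "TZ = (\<Sum>i<n. (1 - chi h i) * (x i * x i))"
  have q: "qf n (dist_matrix n (Khn h n)) x = 2 * (a + b) * (a + b) - 2 * (TK + TZ) - (a * a - TK) - 2 * x 0 * b"
    unfolding Khn_qf[OF h hn] F(1) a_def[symmetric] b_def[symmetric] TK_def[symmetric] TZ_def[symmetric]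
      sq_def[symmetric] F(2) ..
  have sq: "sq n x = TK + TZ" unfolding F(2) TK_def TZ_def ..
  have x0: "x 0 = 2 * (a + b)" using c2 unfolding F(1) a_def b_def .
  have TK: "TK \<ge> x 0 * x 0" using F(4) unfolding TK_def .
  have TZ: "TZ \<ge> 0" using F(3) unfolding TZ_def .
  define L where "L = 1 * (qf n (dist_matrix n (Khn h n)) x - (- 1 / 2) * sq n x)"
  have "2 * L = - 2 * ((a + 2 * b) * (a + 2 * b)) - 3 * TZ - (TK - x 0 * x 0)"
    unfolding L_def q sq x0 by (simp add: algebra_simps)
  moreover have "0 \<le> (a + 2 * b) * (a + 2 * b)" by (rule zero_le_square)
  ultimately have "L \<le> 0" using TK TZ by linarith
  thus "1 * (qf n (dist_matrix n (Khn h n)) x - (- 1 / 2) * sq n x) \<le> 0" unfolding L_def .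
qed

lemma Kneg2:
  assumes h: "0 < h" and hn: "h \<le> n"
  shows "\<forall>x. (\<forall>l::nat<3-1. (\<Sum>i<n. (\<lambda>l i. if l = 0 then 1 - chi h i else chi h i) l i * x i) = 0) \<longrightarrow>
     1 * (qf n (dist_matrix n (Khn h n)) x - (- 1) * sq n x) \<le> (0::real)"
proof (intro allI impI)
  fix x :: "nat \<Rightarrow> real"
  assume "\<forall>l::nat<3-1. (\<Sum>i<n. (\<lambda>l i. if l = 0 then 1 - chi h i else chi h i) l i * x i) = (0::real)"
  hence c1: "(\<Sum>i<n. (1 - chi h i) * x i) = 0" and c2: "(\<Sum>i<n. chi h i * x i) = 0"
    by (auto dest: spec[of _ 0] spec[of _ 1])
  note F = Khn_facts[OF h hn, of x]
  show "1 * (qf n (dist_matrix n (Khn h n)) x - (- 1) * sq n x) \<le> 0"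
    unfolding Khn_qf[OF h hn] sq_def[symmetric] F(2) F(1) c1 c2 using F(3) by simp
qed

lemma Kneg3:
  assumes h: "0 < h" and hn: "h \<le> n"
  shows "\<forall>x. (\<forall>l::nat<2-1. (\<Sum>i<n. (\<lambda>l i. 1 - chi h i) l i * x i) = 0) \<longrightarrow>
     (-1) * (qf n (dist_matrix n (Khn h n)) x - (- 2) * sq n x) \<le> (0::real)"
proof (intro allI impI)
  fix x :: "nat \<Rightarrow> real"
  assume "\<forall>l::nat<2-1. (\<Sum>i<n. (\<lambda>l i. 1 - chi h i) l i * x i) = (0::real)"
  hence c1: "(\<Sum>i<n. (1 - chi h i) * x i) = 0" by simp
  note F = Khn_facts[OF h hn, of x]
  have a: "0 \<le> (\<Sum>i<n. chi h i * (x i * x i))" using F(4) by (metis order_trans zero_le_square)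
  have b: "0 \<le> (\<Sum>i<n. chi h i * x i) * (\<Sum>i<n. chi h i * x i)" by (rule zero_le_square)
  have "(-1) * (qf n (dist_matrix n (Khn h n)) x - (- 2) * sq n x) =
     - ((\<Sum>i<n. chi h i * x i) * (\<Sum>i<n. chi h i * x i)) - (\<Sum>i<n. chi h i * (x i * x i))"
    unfolding Khn_qf[OF h hn] sq_def[symmetric] F(2) F(1) c1 by (simp add: algebra_simps)
  thus "(-1) * (qf n (dist_matrix n (Khn h n)) x - (- 2) * sq n x) \<le> 0" using a b by linarith
qed

lemma pos2: fixes a b d x y :: real
  assumes a: "a > 0" and det: "a * d - b * b > 0" and xy: "x \<noteq> 0 \<or> y \<noteq> 0"
  shows "a * x * x + 2 * b * x * y + d * y * y > 0"
proof -
  have id: "a * (a * x * x + 2 * b * x * y + d * y * y) = (a * x + b * y) * (a * x + b * y) + (a * d - b * b) * (y * y)"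
    by (simp add: algebra_simps)
  have "(a * x + b * y) * (a * x + b * y) + (a * d - b * b) * (y * y) > 0"
  proof (cases "y = 0")
    case True
    hence "x \<noteq> 0" using xy by simp
    hence "a * x \<noteq> 0" using a by simp
    hence "(a * x) * (a * x) > 0" using not_real_square_gt_zero by blast
    thus ?thesis using True by simp
  next
    case False
    hence "y * y > 0" using not_real_square_gt_zero by blast
    hence "(a * d - b * b) * (y * y) > 0" using det by simp
    moreover have "(a * x + b * y) * (a * x + b * y) \<ge> 0" by (rule zero_le_square)
    ultimately show ?thesis by linarith
  qed
  hence "a * (a * x * x + 2 * b * x * y + d * y * y) > 0" unfolding id .
  thus ?thesis using a by (simp add: zero_less_mult_iff)
qed

lemma pos3: fixes d1 d2 d3 al be ga x y z :: real
  assumes d: "d1 > 0" "d2 > 0" "d3 > 0" and xyz: "x \<noteq> 0 \<or> y \<noteq> 0 \<or> z \<noteq> 0"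
  shows "d1 * (x + al * y + be * z) * (x + al * y + be * z) + d2 * (y + ga * z) * (y + ga * z) + d3 * z * z > 0"
proof -
  have s1: "d1 * (x + al * y + be * z) * (x + al * y + be * z) \<ge> 0" using d zero_le_square[of "x + al * y + be * z"]
    by (simp add: mult.assoc)
  have s2: "d2 * (y + ga * z) * (y + ga * z) \<ge> 0" using d zero_le_square[of "y + ga * z"]
    by (simp add: mult.assoc)
  have s3: "d3 * z * z \<ge> 0" using d zero_le_square[of z] by (simp add: mult.assoc)
  show ?thesis
  proof (cases "z = 0")
    case False
    hence "z * z > 0" using not_real_square_gt_zero by blast
    hence "d3 * z * z > 0" using d by (simp add: mult.assoc)
    thus ?thesis using s1 s2 by linarith
  next
    case z: True
    show ?thesis
    proof (cases "y = 0")
      case False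
      hence "y * y > 0" using not_real_square_gt_zero by blast
      hence "d2 * (y + ga * z) * (y + ga * z) > 0" using d z by (simp add: mult.assoc)
      thus ?thesis using s1 s3 by linarith
    next
      case y: True
      hence "x \<noteq> 0" using z xyz by simp
      hence "x * x > 0" using not_real_square_gt_zero by blast
      hence "d1 * (x + al * y + be * z) * (x + al * y + be * z) > 0" using d z y by (simp add: mult.assoc)
      thus ?thesis using s2 s3 by linarith
    qed
  qed
qed

lemma C4_pos: "\<forall>c. (\<exists>j<2. c j \<noteq> 0) \<longrightarrow> 1 * ((\<Sum>p<4. \<Sum>q<4. dH C4 p q * (\<Sum>j<2. c j * ([[1,1,1,1],[-1,1,-1,1]] ! j ! p :: real)) * (\<Sum>j<2. c j * ([[1,1,1,1],[-1,1,-1,1]] ! j ! q))) - (- 1 / 2) * (\<Sum>p<4. (\<Sum>j<2. c j * ([[1,1,1,1],[-1,1,-1,1]] ! j ! p)) * (\<Sum>j<2. c j * ([[1,1,1,1],[-1,1,-1,1]] ! j ! p)))) > 0"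
proof (intro allI impI)
  fix c :: "nat \<Rightarrow> real" assume c: "\<exists>j<2. c j \<noteq> 0"
  have c': "c 0 \<noteq> 0 \<or> c 1 \<noteq> 0" using c by (auto simp: less_2_cases_iff)
  have e: "1 * ((\<Sum>p<4. \<Sum>q<4. dH C4 p q * (\<Sum>j<2. c j * ([[1,1,1,1],[-1,1,-1,1]] ! j ! p :: real)) * (\<Sum>j<2. c j * ([[1,1,1,1],[-1,1,-1,1]] ! j ! q))) - (- 1 / 2) * (\<Sum>p<4. (\<Sum>j<2. c j * ([[1,1,1,1],[-1,1,-1,1]] ! j ! p)) * (\<Sum>j<2. c j * ([[1,1,1,1],[-1,1,-1,1]] ! j ! p)))) = (18) * c 0 * c 0 + 2 * (0) * c 0 * c 1 + (2) * c 1 * c 1"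
    by (simp add: eval_nat_numeral dH_def C4_def graph_of_edges_def algebra_simps)
  show "1 * ((\<Sum>p<4. \<Sum>q<4. dH C4 p q * (\<Sum>j<2. c j * ([[1,1,1,1],[-1,1,-1,1]] ! j ! p :: real)) * (\<Sum>j<2. c j * ([[1,1,1,1],[-1,1,-1,1]] ! j ! q))) - (- 1 / 2) * (\<Sum>p<4. (\<Sum>j<2. c j * ([[1,1,1,1],[-1,1,-1,1]] ! j ! p)) * (\<Sum>j<2. c j * ([[1,1,1,1],[-1,1,-1,1]] ! j ! p)))) > 0"
    unfolding e by (rule pos2) (insert c', auto)
qed

lemma C4_diam: "\<forall>p<4. \<forall>q<4. p \<noteq> q \<longrightarrow> \<not> C4 p q \<longrightarrow> (\<exists>r<4. C4 p r \<and> C4 r q)"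
  by (simp add: eval_nat_numeral C4_def graph_of_edges_def All_less_Suc Ex_less_Suc)

lemma C5_pos: "\<forall>c. (\<exists>j<2. c j \<noteq> 0) \<longrightarrow> 1 * ((\<Sum>p<5. \<Sum>q<5. dH C5 p q * (\<Sum>j<2. c j * ([[2,2,2,2,2],[0,-1,2,-2,1]] ! j ! p :: real)) * (\<Sum>j<2. c j * ([[2,2,2,2,2],[0,-1,2,-2,1]] ! j ! q))) - (- 1 / 2) * (\<Sum>p<5. (\<Sum>j<2. c j * ([[2,2,2,2,2],[0,-1,2,-2,1]] ! j ! p)) * (\<Sum>j<2. c j * ([[2,2,2,2,2],[0,-1,2,-2,1]] ! j ! p)))) > 0"
proof (intro allI impI)
  fix c :: "nat \<Rightarrow> real" assume c: "\<exists>j<2. c j \<noteq> 0"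
  have c': "c 0 \<noteq> 0 \<or> c 1 \<noteq> 0" using c by (auto simp: less_2_cases_iff)
  have e: "1 * ((\<Sum>p<5. \<Sum>q<5. dH C5 p q * (\<Sum>j<2. c j * ([[2,2,2,2,2],[0,-1,2,-2,1]] ! j ! p :: real)) * (\<Sum>j<2. c j * ([[2,2,2,2,2],[0,-1,2,-2,1]] ! j ! q))) - (- 1 / 2) * (\<Sum>p<5. (\<Sum>j<2. c j * ([[2,2,2,2,2],[0,-1,2,-2,1]] ! j ! p)) * (\<Sum>j<2. c j * ([[2,2,2,2,2],[0,-1,2,-2,1]] ! j ! p)))) = (130) * c 0 * c 0 + 2 * (0) * c 0 * c 1 + (1) * c 1 * c 1"
    by (simp add: eval_nat_numeral dH_def C5_def graph_of_edges_def algebra_simps)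
  show "1 * ((\<Sum>p<5. \<Sum>q<5. dH C5 p q * (\<Sum>j<2. c j * ([[2,2,2,2,2],[0,-1,2,-2,1]] ! j ! p :: real)) * (\<Sum>j<2. c j * ([[2,2,2,2,2],[0,-1,2,-2,1]] ! j ! q))) - (- 1 / 2) * (\<Sum>p<5. (\<Sum>j<2. c j * ([[2,2,2,2,2],[0,-1,2,-2,1]] ! j ! p)) * (\<Sum>j<2. c j * ([[2,2,2,2,2],[0,-1,2,-2,1]] ! j ! p)))) > 0"
    unfolding e by (rule pos2) (insert c', auto)
qed

lemma C5_diam: "\<forall>p<5. \<forall>q<5. p \<noteq> q \<longrightarrow> \<not> C5 p q \<longrightarrow> (\<exists>r<5. C5 p r \<and> C5 r q)"
  by (simp add: eval_nat_numeral C5_def graph_of_edges_def All_less_Suc Ex_less_Suc)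

lemma H1_pos: "\<forall>c. (\<exists>j<2. c j \<noteq> 0) \<longrightarrow> 1 * ((\<Sum>p<5. \<Sum>q<5. dH H1 p q * (\<Sum>j<2. c j * ([[2,2,2,2,1],[1,-2,2,-1,0]] ! j ! p :: real)) * (\<Sum>j<2. c j * ([[2,2,2,2,1],[1,-2,2,-1,0]] ! j ! q))) - (- 1 / 2) * (\<Sum>p<5. (\<Sum>j<2. c j * ([[2,2,2,2,1],[1,-2,2,-1,0]] ! j ! p)) * (\<Sum>j<2. c j * ([[2,2,2,2,1],[1,-2,2,-1,0]] ! j ! p)))) > 0"
proof (intro allI impI)
  fix c :: "nat \<Rightarrow> real" assume c: "\<exists>j<2. c j \<noteq> 0"
  have c': "c 0 \<noteq> 0 \<or> c 1 \<noteq> 0" using c by (auto simp: less_2_cases_iff)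
  have e: "1 * ((\<Sum>p<5. \<Sum>q<5. dH H1 p q * (\<Sum>j<2. c j * ([[2,2,2,2,1],[1,-2,2,-1,0]] ! j ! p :: real)) * (\<Sum>j<2. c j * ([[2,2,2,2,1],[1,-2,2,-1,0]] ! j ! q))) - (- 1 / 2) * (\<Sum>p<5. (\<Sum>j<2. c j * ([[2,2,2,2,1],[1,-2,2,-1,0]] ! j ! p)) * (\<Sum>j<2. c j * ([[2,2,2,2,1],[1,-2,2,-1,0]] ! j ! p)))) = (193/2) * c 0 * c 0 + 2 * (0) * c 0 * c 1 + (1) * c 1 * c 1"
    by (simp add: eval_nat_numeral dH_def H1_def graph_of_edges_def algebra_simps)
  show "1 * ((\<Sum>p<5. \<Sum>q<5. dH H1 p q * (\<Sum>j<2. c j * ([[2,2,2,2,1],[1,-2,2,-1,0]] ! j ! p :: real)) * (\<Sum>j<2. c j * ([[2,2,2,2,1],[1,-2,2,-1,0]] ! j ! q))) - (- 1 / 2) * (\<Sum>p<5. (\<Sum>j<2. c j * ([[2,2,2,2,1],[1,-2,2,-1,0]] ! j ! p)) * (\<Sum>j<2. c j * ([[2,2,2,2,1],[1,-2,2,-1,0]] ! j ! p)))) > 0"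
    unfolding e by (rule pos2) (insert c', auto)
qed

lemma H1_diam: "\<forall>p<5. \<forall>q<5. p \<noteq> q \<longrightarrow> \<not> H1 p q \<longrightarrow> (\<exists>r<5. H1 p r \<and> H1 r q)"
  by (simp add: eval_nat_numeral H1_def graph_of_edges_def All_less_Suc Ex_less_Suc)

lemma H4_pos: "\<forall>c. (\<exists>j<3. c j \<noteq> 0) \<longrightarrow> 1 * ((\<Sum>p<5. \<Sum>q<5. dH H4 p q * (\<Sum>j<3. c j * ([[2,1,2,2,2],[1,-2,0,-2,1],[-1,-2,1,2,-1]] ! j ! p :: real)) * (\<Sum>j<3. c j * ([[2,1,2,2,2],[1,-2,0,-2,1],[-1,-2,1,2,-1]] ! j ! q))) - (- 1) * (\<Sum>p<5. (\<Sum>j<3. c j * ([[2,1,2,2,2],[1,-2,0,-2,1],[-1,-2,1,2,-1]] ! j ! p)) * (\<Sum>j<3. c j * ([[2,1,2,2,2],[1,-2,0,-2,1],[-1,-2,1,2,-1]] ! j ! p)))) > 0"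
proof (intro allI impI)
  fix c :: "nat \<Rightarrow> real" assume c: "\<exists>j<3. c j \<noteq> 0"
  have c': "c 0 \<noteq> 0 \<or> c 1 \<noteq> 0 \<or> c 2 \<noteq> 0" using c by (auto simp: less_Suc_eq numeral_eq_Suc)
  have e: "1 * ((\<Sum>p<5. \<Sum>q<5. dH H4 p q * (\<Sum>j<3. c j * ([[2,1,2,2,2],[1,-2,0,-2,1],[-1,-2,1,2,-1]] ! j ! p :: real)) * (\<Sum>j<3. c j * ([[2,1,2,2,2],[1,-2,0,-2,1],[-1,-2,1,2,-1]] ! j ! q))) - (- 1) * (\<Sum>p<5. (\<Sum>j<3. c j * ([[2,1,2,2,2],[1,-2,0,-2,1],[-1,-2,1,2,-1]] ! j ! p)) * (\<Sum>j<3. c j * ([[2,1,2,2,2],[1,-2,0,-2,1],[-1,-2,1,2,-1]] ! j ! p)))) = (113) * (c 0 + (-14/113) * c 1 + (-7/113) * c 2) * (c 0 + (-14/113) * c 1 + (-7/113) * c 2) + (482/113) * (c 1 + (-49/241) * c 2) * (c 1 + (-49/241) * c 2) + (576/241) * c 2 * c 2"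
    by (simp add: eval_nat_numeral dH_def H4_def graph_of_edges_def algebra_simps)
  show "1 * ((\<Sum>p<5. \<Sum>q<5. dH H4 p q * (\<Sum>j<3. c j * ([[2,1,2,2,2],[1,-2,0,-2,1],[-1,-2,1,2,-1]] ! j ! p :: real)) * (\<Sum>j<3. c j * ([[2,1,2,2,2],[1,-2,0,-2,1],[-1,-2,1,2,-1]] ! j ! q))) - (- 1) * (\<Sum>p<5. (\<Sum>j<3. c j * ([[2,1,2,2,2],[1,-2,0,-2,1],[-1,-2,1,2,-1]] ! j ! p)) * (\<Sum>j<3. c j * ([[2,1,2,2,2],[1,-2,0,-2,1],[-1,-2,1,2,-1]] ! j ! p)))) > 0"
    unfolding e by (rule pos3) (insert c', auto)
qed

lemma H4_diam: "\<forall>p<5. \<forall>q<5. p \<noteq> q \<longrightarrow> \<not> H4 p q \<longrightarrow> (\<exists>r<5. H4 p r \<and> H4 r q)"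
  by (simp add: eval_nat_numeral H4_def graph_of_edges_def All_less_Suc Ex_less_Suc)

lemma H9_pos: "\<forall>c. (\<exists>j<2. c j \<noteq> 0) \<longrightarrow> 1 * ((\<Sum>p<5. \<Sum>q<5. dH H9 p q * (\<Sum>j<2. c j * ([[1,1,1,1,1],[-1,-1,1,-1,1]] ! j ! p :: real)) * (\<Sum>j<2. c j * ([[1,1,1,1,1],[-1,-1,1,-1,1]] ! j ! q))) - (- 1 / 2) * (\<Sum>p<5. (\<Sum>j<2. c j * ([[1,1,1,1,1],[-1,-1,1,-1,1]] ! j ! p)) * (\<Sum>j<2. c j * ([[1,1,1,1,1],[-1,-1,1,-1,1]] ! j ! p)))) > 0"
proof (intro allI impI)
  fix c :: "nat \<Rightarrow> real" assume c: "\<exists>j<2. c j \<noteq> 0"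
  have c': "c 0 \<noteq> 0 \<or> c 1 \<noteq> 0" using c by (auto simp: less_2_cases_iff)
  have e: "1 * ((\<Sum>p<5. \<Sum>q<5. dH H9 p q * (\<Sum>j<2. c j * ([[1,1,1,1,1],[-1,-1,1,-1,1]] ! j ! p :: real)) * (\<Sum>j<2. c j * ([[1,1,1,1,1],[-1,-1,1,-1,1]] ! j ! q))) - (- 1 / 2) * (\<Sum>p<5. (\<Sum>j<2. c j * ([[1,1,1,1,1],[-1,-1,1,-1,1]] ! j ! p)) * (\<Sum>j<2. c j * ([[1,1,1,1,1],[-1,-1,1,-1,1]] ! j ! p)))) = (49/2) * c 0 * c 0 + 2 * (-5/2) * c 0 * c 1 + (1/2) * c 1 * c 1"
    by (simp add: eval_nat_numeral dH_def H9_def graph_of_edges_def algebra_simps)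
  show "1 * ((\<Sum>p<5. \<Sum>q<5. dH H9 p q * (\<Sum>j<2. c j * ([[1,1,1,1,1],[-1,-1,1,-1,1]] ! j ! p :: real)) * (\<Sum>j<2. c j * ([[1,1,1,1,1],[-1,-1,1,-1,1]] ! j ! q))) - (- 1 / 2) * (\<Sum>p<5. (\<Sum>j<2. c j * ([[1,1,1,1,1],[-1,-1,1,-1,1]] ! j ! p)) * (\<Sum>j<2. c j * ([[1,1,1,1,1],[-1,-1,1,-1,1]] ! j ! p)))) > 0"
    unfolding e by (rule pos2) (insert c', auto)
qed

lemma H9_diam: "\<forall>p<5. \<forall>q<5. p \<noteq> q \<longrightarrow> \<not> H9 p q \<longrightarrow> (\<exists>r<5. H9 p r \<and> H9 r q)"
  by (simp add: eval_nat_numeral H9_def graph_of_edges_def All_less_Suc Ex_less_Suc)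

lemma H10_pos: "\<forall>c. (\<exists>j<2. c j \<noteq> 0) \<longrightarrow> 1 * ((\<Sum>p<5. \<Sum>q<5. dH H10 p q * (\<Sum>j<2. c j * ([[1,1,1,1,1],[-1,-1,0,0,0]] ! j ! p :: real)) * (\<Sum>j<2. c j * ([[1,1,1,1,1],[-1,-1,0,0,0]] ! j ! q))) - (- 1 / 2) * (\<Sum>p<5. (\<Sum>j<2. c j * ([[1,1,1,1,1],[-1,-1,0,0,0]] ! j ! p)) * (\<Sum>j<2. c j * ([[1,1,1,1,1],[-1,-1,0,0,0]] ! j ! p)))) > 0"
proof (intro allI impI)
  fix c :: "nat \<Rightarrow> real" assume c: "\<exists>j<2. c j \<noteq> 0"
  have c': "c 0 \<noteq> 0 \<or> c 1 \<noteq> 0" using c by (auto simp: less_2_cases_iff)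
  have e: "1 * ((\<Sum>p<5. \<Sum>q<5. dH H10 p q * (\<Sum>j<2. c j * ([[1,1,1,1,1],[-1,-1,0,0,0]] ! j ! p :: real)) * (\<Sum>j<2. c j * ([[1,1,1,1,1],[-1,-1,0,0,0]] ! j ! q))) - (- 1 / 2) * (\<Sum>p<5. (\<Sum>j<2. c j * ([[1,1,1,1,1],[-1,-1,0,0,0]] ! j ! p)) * (\<Sum>j<2. c j * ([[1,1,1,1,1],[-1,-1,0,0,0]] ! j ! p)))) = (57/2) * c 0 * c 0 + 2 * (-9) * c 0 * c 1 + (3) * c 1 * c 1"
    by (simp add: eval_nat_numeral dH_def H10_def graph_of_edges_def algebra_simps)
  show "1 * ((\<Sum>p<5. \<Sum>q<5. dH H10 p q * (\<Sum>j<2. c j * ([[1,1,1,1,1],[-1,-1,0,0,0]] ! j ! p :: real)) * (\<Sum>j<2. c j * ([[1,1,1,1,1],[-1,-1,0,0,0]] ! j ! q))) - (- 1 / 2) * (\<Sum>p<5. (\<Sum>j<2. c j * ([[1,1,1,1,1],[-1,-1,0,0,0]] ! j ! p)) * (\<Sum>j<2. c j * ([[1,1,1,1,1],[-1,-1,0,0,0]] ! j ! p)))) > 0"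
    unfolding e by (rule pos2) (insert c', auto)
qed

lemma H10_diam: "\<forall>p<5. \<forall>q<5. p \<noteq> q \<longrightarrow> \<not> H10 p q \<longrightarrow> (\<exists>r<5. H10 p r \<and> H10 r q)"
  by (simp add: eval_nat_numeral H10_def graph_of_edges_def All_less_Suc Ex_less_Suc)

lemma H11_pos: "\<forall>c. (\<exists>j<2. c j \<noteq> 0) \<longrightarrow> 1 * ((\<Sum>p<6. \<Sum>q<6. dH H11 p q * (\<Sum>j<2. c j * ([[2,2,2,2,2,3],[-3,-3,1,1,1,2]] ! j ! p :: real)) * (\<Sum>j<2. c j * ([[2,2,2,2,2,3],[-3,-3,1,1,1,2]] ! j ! q))) - (- 1 / 2) * (\<Sum>p<6. (\<Sum>j<2. c j * ([[2,2,2,2,2,3],[-3,-3,1,1,1,2]] ! j ! p)) * (\<Sum>j<2. c j * ([[2,2,2,2,2,3],[-3,-3,1,1,1,2]] ! j ! p)))) > 0"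
proof (intro allI impI)
  fix c :: "nat \<Rightarrow> real" assume c: "\<exists>j<2. c j \<noteq> 0"
  have c': "c 0 \<noteq> 0 \<or> c 1 \<noteq> 0" using c by (auto simp: less_2_cases_iff)
  have e: "1 * ((\<Sum>p<6. \<Sum>q<6. dH H11 p q * (\<Sum>j<2. c j * ([[2,2,2,2,2,3],[-3,-3,1,1,1,2]] ! j ! p :: real)) * (\<Sum>j<2. c j * ([[2,2,2,2,2,3],[-3,-3,1,1,1,2]] ! j ! q))) - (- 1 / 2) * (\<Sum>p<6. (\<Sum>j<2. c j * ([[2,2,2,2,2,3],[-3,-3,1,1,1,2]] ! j ! p)) * (\<Sum>j<2. c j * ([[2,2,2,2,2,3],[-3,-3,1,1,1,2]] ! j ! p)))) = (381/2) * c 0 * c 0 + 2 * (8) * c 0 * c 1 + (1/2) * c 1 * c 1"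
    by (simp add: eval_nat_numeral dH_def H11_def graph_of_edges_def algebra_simps)
  show "1 * ((\<Sum>p<6. \<Sum>q<6. dH H11 p q * (\<Sum>j<2. c j * ([[2,2,2,2,2,3],[-3,-3,1,1,1,2]] ! j ! p :: real)) * (\<Sum>j<2. c j * ([[2,2,2,2,2,3],[-3,-3,1,1,1,2]] ! j ! q))) - (- 1 / 2) * (\<Sum>p<6. (\<Sum>j<2. c j * ([[2,2,2,2,2,3],[-3,-3,1,1,1,2]] ! j ! p)) * (\<Sum>j<2. c j * ([[2,2,2,2,2,3],[-3,-3,1,1,1,2]] ! j ! p)))) > 0"
    unfolding e by (rule pos2) (insert c', auto)
qed

lemma H11_diam: "\<forall>p<6. \<forall>q<6. p \<noteq> q \<longrightarrow> \<not> H11 p q \<longrightarrow> (\<exists>r<6. H11 p r \<and> H11 r q)"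
  by (simp add: eval_nat_numeral H11_def graph_of_edges_def All_less_Suc Ex_less_Suc)

lemma H12_pos: "\<forall>c. (\<exists>j<2. c j \<noteq> 0) \<longrightarrow> 1 * ((\<Sum>p<6. \<Sum>q<6. dH H12 p q * (\<Sum>j<2. c j * ([[1,1,1,1,1,1],[-1,-1,0,0,0,0]] ! j ! p :: real)) * (\<Sum>j<2. c j * ([[1,1,1,1,1,1],[-1,-1,0,0,0,0]] ! j ! q))) - (- 1 / 2) * (\<Sum>p<6. (\<Sum>j<2. c j * ([[1,1,1,1,1,1],[-1,-1,0,0,0,0]] ! j ! p)) * (\<Sum>j<2. c j * ([[1,1,1,1,1,1],[-1,-1,0,0,0,0]] ! j ! p)))) > 0"
proof (intro allI impI)
  fix c :: "nat \<Rightarrow> real" assume c: "\<exists>j<2. c j \<noteq> 0"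
  have c': "c 0 \<noteq> 0 \<or> c 1 \<noteq> 0" using c by (auto simp: less_2_cases_iff)
  have e: "1 * ((\<Sum>p<6. \<Sum>q<6. dH H12 p q * (\<Sum>j<2. c j * ([[1,1,1,1,1,1],[-1,-1,0,0,0,0]] ! j ! p :: real)) * (\<Sum>j<2. c j * ([[1,1,1,1,1,1],[-1,-1,0,0,0,0]] ! j ! q))) - (- 1 / 2) * (\<Sum>p<6. (\<Sum>j<2. c j * ([[1,1,1,1,1,1],[-1,-1,0,0,0,0]] ! j ! p)) * (\<Sum>j<2. c j * ([[1,1,1,1,1,1],[-1,-1,0,0,0,0]] ! j ! p)))) = (41) * c 0 * c 0 + 2 * (-11) * c 0 * c 1 + (3) * c 1 * c 1"
    by (simp add: eval_nat_numeral dH_def H12_def graph_of_edges_def algebra_simps)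
  show "1 * ((\<Sum>p<6. \<Sum>q<6. dH H12 p q * (\<Sum>j<2. c j * ([[1,1,1,1,1,1],[-1,-1,0,0,0,0]] ! j ! p :: real)) * (\<Sum>j<2. c j * ([[1,1,1,1,1,1],[-1,-1,0,0,0,0]] ! j ! q))) - (- 1 / 2) * (\<Sum>p<6. (\<Sum>j<2. c j * ([[1,1,1,1,1,1],[-1,-1,0,0,0,0]] ! j ! p)) * (\<Sum>j<2. c j * ([[1,1,1,1,1,1],[-1,-1,0,0,0,0]] ! j ! p)))) > 0"
    unfolding e by (rule pos2) (insert c', auto)
qed

lemma H12_diam: "\<forall>p<6. \<forall>q<6. p \<noteq> q \<longrightarrow> \<not> H12 p q \<longrightarrow> (\<exists>r<6. H12 p r \<and> H12 r q)"
  by (simp add: eval_nat_numeral H12_def graph_of_edges_def All_less_Suc Ex_less_Suc)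

lemma H13_pos: "\<forall>c. (\<exists>j<2. c j \<noteq> 0) \<longrightarrow> (-1) * ((\<Sum>p<6. \<Sum>q<6. dH H13 p q * (\<Sum>j<2. c j * ([[0,-1,-1,1,1,0],[0,-1,-1,-1,-1,3]] ! j ! p :: real)) * (\<Sum>j<2. c j * ([[0,-1,-1,1,1,0],[0,-1,-1,-1,-1,3]] ! j ! q))) - (- 2) * (\<Sum>p<6. (\<Sum>j<2. c j * ([[0,-1,-1,1,1,0],[0,-1,-1,-1,-1,3]] ! j ! p)) * (\<Sum>j<2. c j * ([[0,-1,-1,1,1,0],[0,-1,-1,-1,-1,3]] ! j ! p)))) > 0"
proof (intro allI impI)
  fix c :: "nat \<Rightarrow> real" assume c: "\<exists>j<2. c j \<noteq> 0"
  have c': "c 0 \<noteq> 0 \<or> c 1 \<noteq> 0" using c by (auto simp: less_2_cases_iff)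
  have e: "(-1) * ((\<Sum>p<6. \<Sum>q<6. dH H13 p q * (\<Sum>j<2. c j * ([[0,-1,-1,1,1,0],[0,-1,-1,-1,-1,3]] ! j ! p :: real)) * (\<Sum>j<2. c j * ([[0,-1,-1,1,1,0],[0,-1,-1,-1,-1,3]] ! j ! q))) - (- 2) * (\<Sum>p<6. (\<Sum>j<2. c j * ([[0,-1,-1,1,1,0],[0,-1,-1,-1,-1,3]] ! j ! p)) * (\<Sum>j<2. c j * ([[0,-1,-1,1,1,0],[0,-1,-1,-1,-1,3]] ! j ! p)))) = (4) * c 0 * c 0 + 2 * (0) * c 0 * c 1 + (2) * c 1 * c 1"
    by (simp add: eval_nat_numeral dH_def H13_def graph_of_edges_def algebra_simps)
  show "(-1) * ((\<Sum>p<6. \<Sum>q<6. dH H13 p q * (\<Sum>j<2. c j * ([[0,-1,-1,1,1,0],[0,-1,-1,-1,-1,3]] ! j ! p :: real)) * (\<Sum>j<2. c j * ([[0,-1,-1,1,1,0],[0,-1,-1,-1,-1,3]] ! j ! q))) - (- 2) * (\<Sum>p<6. (\<Sum>j<2. c j * ([[0,-1,-1,1,1,0],[0,-1,-1,-1,-1,3]] ! j ! p)) * (\<Sum>j<2. c j * ([[0,-1,-1,1,1,0],[0,-1,-1,-1,-1,3]] ! j ! p)))) > 0"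
    unfolding e by (rule pos2) (insert c', auto)
qed

lemma H13_diam: "\<forall>p<6. \<forall>q<6. p \<noteq> q \<longrightarrow> \<not> H13 p q \<longrightarrow> (\<exists>r<6. H13 p r \<and> H13 r q)"
  by (simp add: eval_nat_numeral H13_def graph_of_edges_def All_less_Suc Ex_less_Suc)

theorem lemma3p1:
  fixes n h :: nat and E :: "nat \<Rightarrow> nat \<Rightarrow> bool"
  assumes "3 \<le> h" and "h \<le> n - 1"
    and "simple_graph n E" and "connected_graph n E"
    and "D_cospectral n E n (Khn h n)"
  shows "\<not> has_induced n E 4 C4 \<and> \<not> has_induced n E 5 C5 \<and>
         \<not> has_induced n E 5 H1 \<and> \<not> has_induced n E 5 H4 \<and>
         \<not> has_induced n E 5 H9 \<and> \<not> has_induced n E 5 H10 \<and>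
         \<not> has_induced n E 6 H11 \<and> \<not> has_induced n E 6 H12 \<and>
         \<not> has_induced n E 6 H13"
proof -
  have h0: "0 < h" using assms(1) by simp
  have hn: "h \<le> n" using assms(1,2) by simp
  note simple = assms(3) and cosp = assms(5)
  note K1 = Kneg1[OF h0 hn] and K2 = Kneg2[OF h0 hn] and K3 = Kneg3[OF h0 hn]
  have "\<not> has_induced n E 4 C4"
    using no_induced[OF simple cosp _ _ C4_diam C4_pos K1] by auto
  moreover have "\<not> has_induced n E 5 C5"
    using no_induced[OF simple cosp _ _ C5_diam C5_pos K1] by auto
  moreover have "\<not> has_induced n E 5 H1"
    using no_induced[OF simple cosp _ _ H1_diam H1_pos K1] by auto
  moreover have "\<not> has_induced n E 5 H4"
    using no_induced[OF simple cosp _ _ H4_diam H4_pos K2] by auto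
  moreover have "\<not> has_induced n E 5 H9"
    using no_induced[OF simple cosp _ _ H9_diam H9_pos K1] by auto
  moreover have "\<not> has_induced n E 5 H10"
    using no_induced[OF simple cosp _ _ H10_diam H10_pos K1] by auto
  moreover have "\<not> has_induced n E 6 H11"
    using no_induced[OF simple cosp _ _ H11_diam H11_pos K1] by auto
  moreover have "\<not> has_induced n E 6 H12"
    using no_induced[OF simple cosp _ _ H12_diam H12_pos K1] by auto
  moreover have "\<not> has_induced n E 6 H13"
    using no_induced[OF simple cosp _ _ H13_diam H13_pos K3] by auto
  ultimately show ?thesis by blast
qed

end
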